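(* Let $\varphi: S\to R$ be a ring morphism, $W\in S$, $(X,d)$ a finite rank matrix factorisation of $W$ over $R$ with fixed homogeneous $R$-basis $\{\xi_i\}$, and $\mathbf{t}=\{t_1,\ldots,t_n\}$ a quasi-regular sequence in $R$ with odd $R$-linear maps $\lambda_j$ on $X$ satisfying $\lambda_j d + d\lambda_j = t_j\cdot 1_X$. Suppose given $S$-linear maps $\sigma: R/\mathbf{t}R\to K(\mathbf{t})$ (a morphism of complexes) and $h$ of degree $-1$ on $K(\mathbf{t})$ with $\pi\sigma=1$, $\sigma\pi = 1+\delta h + h\delta$, $h^2=0$, $h\sigma = 0$, $\pi h = 0$. Let $\sigma_\infty = \sum_{m\ge0}(hd)^m\sigma: X/\mathbf{t}X\to X\otimes_R K(\mathbf{t})$, $\psi = \varepsilon\circ\sigma_\infty: X/\mathbf{t}X\to X[n]$, and $\vartheta = (-1)^n\lambda_1\cdots\lambda_n: X[n]\to X/\mathbf{t}X$ (the map $X\to X$ followed by the quotient). Then $\psi\circ\vartheta = 1$ in the homotopy category $\mathrm{hf}(S,W)$, hence $e = \vartheta\circ\psi$ is an idempotent endomorphism of $X/\mathbf{t}X$ in $\mathrm{hf}(S,W)$, and \[ e = (-1)^n\lambda_1\cdots\lambda_n\,\varepsilon\,(hd)^n\sigma. \]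
   Context: All rings commutative. Linear factorisation of $W$ over $R$: $\mathbb{Z}/2$-graded $R$-module with odd $R$-linear $d$, $d^2=W\cdot1$; morphisms are even maps commuting with differentials; $\mathrm{hf}(S,W)$ is the homotopy category of linear factorisations of $W$ over $S$ (all $R$-modules being viewed as $S$-modules via $\varphi$). $X[n]$ is the $n$-fold suspension. The Koszul complex $K(\mathbf{t})$ is the exterior algebra on free symbols $\mathrm{d}t_1,\ldots,\mathrm{d}t_n$ of degree $-1$ with differential $\delta$ = contraction with $\sum_it_i(\mathrm{d}t_i)^*$; $\pi: K(\mathbf{t})\to R/\mathbf{t}R$ is the augmentation. $X\otimes_RK(\mathbf{t})$ is formed with the $\mathbb{Z}/2$-folding of $K(\mathbf{t})$ and has differential $d\otimes1+1\otimes\delta$. The maps $h,\sigma$ are extended using the basis by $h(\xi_i\otimes m) = (-1)^{|\xi_i|}\xi_i\otimes h(m)$, $\sigma(\xi_i\otimes p) = \xi_i\otimes\sigma(p)$, and $d$ means $d\otimes 1$. The map $\varepsilon: X\otimes K(\mathbf{t})\to X[n]$ sends $x\otimes\mathrm{d}t_1\cdots\mathrm{d}t_n\mapsto(-1)^{n|x|}x$ and vanishes on the other exterior degrees. $X/\mathbf{t}X = X\otimes_RR/\mathbf{t}R$. *)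

theory Defs
  imports Main
begin

text \<open>X is free of finite rank r over R with homogeneous basis xi_0..xi_(r-1); par i = True iff
  xi_i is odd. Elements of X are coordinate vectors nat => 'r vanishing at indices >= r;
  R-linear maps on X are matrices. t_1..t_n are t 0 .. t (n-1).\<close>

definition is_ring_hom :: "('s::comm_ring_1 \<Rightarrow> 'r::comm_ring_1) \<Rightarrow> bool" where
  "is_ring_hom phi \<longleftrightarrow> phi 0 = 0 \<and> phi 1 = 1 \<and> (\<forall>a b. phi (a + b) = phi a + phi b)
      \<and> (\<forall>a b. phi (a * b) = phi a * phi b)"

definition in_tideal :: "(nat \<Rightarrow> 'r::comm_ring_1) \<Rightarrow> nat \<Rightarrow> 'r \<Rightarrow> bool" where
  "in_tideal t n a \<longleftrightarrow> (\<exists>c. a = (\<Sum>i<n. c i * t i))"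

definition vecs :: "nat \<Rightarrow> (nat \<Rightarrow> 'r::zero) set" where
  "vecs r = {x. \<forall>i\<ge>r. x i = 0}"

definition mv :: "nat \<Rightarrow> (nat \<Rightarrow> nat \<Rightarrow> 'r::comm_ring_1) \<Rightarrow> (nat \<Rightarrow> 'r) \<Rightarrow> nat \<Rightarrow> 'r" where
  "mv r M x = (\<lambda>i. if i < r then (\<Sum>j<r. M i j * x j) else 0)"

definition odd_matrix :: "nat \<Rightarrow> (nat \<Rightarrow> bool) \<Rightarrow> (nat \<Rightarrow> nat \<Rightarrow> 'r::zero) \<Rightarrow> bool" where
  "odd_matrix r par M \<longleftrightarrow> (\<forall>i<r. \<forall>j<r. par i = par j \<longrightarrow> M i j = 0)"

definition is_mf :: "nat \<Rightarrow> (nat \<Rightarrow> bool) \<Rightarrow> 'r::comm_ring_1 \<Rightarrow> (nat \<Rightarrow> nat \<Rightarrow> 'r) \<Rightarrow> bool" where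
  "is_mf r par w D \<longleftrightarrow> odd_matrix r par D \<and>
     (\<forall>i<r. \<forall>j<r. (\<Sum>k<r. D i k * D k j) = (if i = j then w else 0))"

definition even_vec :: "nat \<Rightarrow> (nat \<Rightarrow> bool) \<Rightarrow> (nat \<Rightarrow> 'r::zero) \<Rightarrow> bool" where
  "even_vec r par x \<longleftrightarrow> (\<forall>i<r. par i \<longrightarrow> x i = 0)"

definition odd_vec :: "nat \<Rightarrow> (nat \<Rightarrow> bool) \<Rightarrow> (nat \<Rightarrow> 'r::zero) \<Rightarrow> bool" where
  "odd_vec r par x \<longleftrightarrow> (\<forall>i<r. \<not> par i \<longrightarrow> x i = 0)"

text \<open>K(t): coefficient functions on subsets B of {0..n-1}; B stands for the wedge of the
  dt_i, i in B, in increasing order. Exterior degree of B is card B (Z-degree -card B).\<close>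
definition kos :: "nat \<Rightarrow> (nat set \<Rightarrow> 'r::zero) set" where
  "kos n = {k. \<forall>B. \<not> B \<subseteq> {..<n} \<longrightarrow> k B = 0}"

definition homog :: "nat \<Rightarrow> (nat set \<Rightarrow> 'r::zero) \<Rightarrow> bool" where
  "homog p k \<longleftrightarrow> (\<forall>B. card B \<noteq> p \<longrightarrow> k B = 0)"

text \<open>delta = contraction with sum_i t_i (dt_i)^*.\<close>
definition kdelta :: "(nat \<Rightarrow> 'r::comm_ring_1) \<Rightarrow> nat \<Rightarrow> (nat set \<Rightarrow> 'r) \<Rightarrow> nat set \<Rightarrow> 'r" where
  "kdelta t n k = (\<lambda>B. if B \<subseteq> {..<n} then
      (\<Sum>i\<in>{..<n} - B. (-1) ^ card {b\<in>B. b < i} * t i * k (insert i B)) else 0)"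

definition quasi_regular :: "(nat \<Rightarrow> 'r::comm_ring_1) \<Rightarrow> nat \<Rightarrow> bool" where
  "quasi_regular t n \<longleftrightarrow> (\<forall>p\<ge>1. \<forall>k\<in>kos n. homog p k \<and> kdelta t n k = (\<lambda>_. 0) \<longrightarrow>
      (\<exists>k'\<in>kos n. homog (p + 1) k' \<and> kdelta t n k' = k))"

text \<open>An element of X (x) K(t) is sum_i xi_i (x) z i, encoded as z :: nat => nat set => 'r.\<close>
definition dT :: "nat \<Rightarrow> (nat \<Rightarrow> nat \<Rightarrow> 'r::comm_ring_1) \<Rightarrow> (nat \<Rightarrow> nat set \<Rightarrow> 'r) \<Rightarrow> nat \<Rightarrow> nat set \<Rightarrow> 'r" where
  "dT r D z = (\<lambda>i B. if i < r then (\<Sum>j<r. D i j * z j B) else 0)"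

definition hT :: "nat \<Rightarrow> (nat \<Rightarrow> bool) \<Rightarrow> ((nat set \<Rightarrow> 'r::comm_ring_1) \<Rightarrow> (nat set \<Rightarrow> 'r))
     \<Rightarrow> (nat \<Rightarrow> nat set \<Rightarrow> 'r) \<Rightarrow> nat \<Rightarrow> nat set \<Rightarrow> 'r" where
  "hT r par h z = (\<lambda>i B. if i < r then (if par i then -1 else 1) * h (z i) B else 0)"

definition sigT :: "nat \<Rightarrow> ('r::comm_ring_1 \<Rightarrow> nat set \<Rightarrow> 'r) \<Rightarrow> (nat \<Rightarrow> 'r) \<Rightarrow> nat \<Rightarrow> nat set \<Rightarrow> 'r" where
  "sigT r sigma x = (\<lambda>i B. if i < r then sigma (x i) B else 0)"

text \<open>epsilon : X (x) K(t) -> X[n], x (x) dt_1...dt_n |-> (-1)^(n|x|) x.\<close>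
definition epsT :: "nat \<Rightarrow> (nat \<Rightarrow> bool) \<Rightarrow> nat \<Rightarrow> (nat \<Rightarrow> nat set \<Rightarrow> 'r::comm_ring_1) \<Rightarrow> nat \<Rightarrow> 'r" where
  "epsT r par n z = (\<lambda>i. if i < r then (if par i then (-1) ^ n else 1) * z i {..<n} else 0)"

definition sig_inf :: "nat \<Rightarrow> (nat \<Rightarrow> bool) \<Rightarrow> (nat \<Rightarrow> nat \<Rightarrow> 'r::comm_ring_1)
    \<Rightarrow> ((nat set \<Rightarrow> 'r) \<Rightarrow> (nat set \<Rightarrow> 'r)) \<Rightarrow> ('r \<Rightarrow> nat set \<Rightarrow> 'r) \<Rightarrow> (nat \<Rightarrow> 'r) \<Rightarrow> nat \<Rightarrow> nat set \<Rightarrow> 'r" where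
  "sig_inf r par D h sigma x = (\<lambda>i B.
     \<Sum>m\<in>{m. ((hT r par h \<circ> dT r D) ^^ m) (sigT r sigma x) i B \<noteq> 0}.
        ((hT r par h \<circ> dT r D) ^^ m) (sigT r sigma x) i B)"

definition psi :: "nat \<Rightarrow> (nat \<Rightarrow> bool) \<Rightarrow> nat \<Rightarrow> (nat \<Rightarrow> nat \<Rightarrow> 'r::comm_ring_1)
    \<Rightarrow> ((nat set \<Rightarrow> 'r) \<Rightarrow> (nat set \<Rightarrow> 'r)) \<Rightarrow> ('r \<Rightarrow> nat set \<Rightarrow> 'r) \<Rightarrow> (nat \<Rightarrow> 'r) \<Rightarrow> nat \<Rightarrow> 'r" where
  "psi r par n D h sigma x = epsT r par n (sig_inf r par D h sigma x)"

text \<open>lamprod r L k = lambda_1 o ... o lambda_k  (lambda_j is the matrix L (j-1)).\<close>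
fun lamprod :: "nat \<Rightarrow> (nat \<Rightarrow> nat \<Rightarrow> nat \<Rightarrow> 'r::comm_ring_1) \<Rightarrow> nat \<Rightarrow> (nat \<Rightarrow> 'r) \<Rightarrow> nat \<Rightarrow> 'r" where
  "lamprod r L 0 x = x"
| "lamprod r L (Suc k) x = lamprod r L k (mv r (L k) x)"

text \<open>theta = (-1)^n lambda_1 ... lambda_n (on representatives; the target is X/tX).\<close>
definition theta :: "nat \<Rightarrow> nat \<Rightarrow> (nat \<Rightarrow> nat \<Rightarrow> nat \<Rightarrow> 'r::comm_ring_1) \<Rightarrow> (nat \<Rightarrow> 'r) \<Rightarrow> nat \<Rightarrow> 'r" where
  "theta r n L x = (\<lambda>i. (-1) ^ n * lamprod r L n x i)"

definition qeq :: "(nat \<Rightarrow> 'r::comm_ring_1) \<Rightarrow> nat \<Rightarrow> (nat \<Rightarrow> 'r) \<Rightarrow> (nat \<Rightarrow> 'r) \<Rightarrow> bool" where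
  "qeq t n x y \<longleftrightarrow> (\<forall>i. in_tideal t n (x i - y i))"

text \<open>Odd S-linear endomorphism of X (equivalently of X[n]: the shift does not change oddness).\<close>
definition odd_Smap :: "('s::comm_ring_1 \<Rightarrow> 'r::comm_ring_1) \<Rightarrow> nat \<Rightarrow> (nat \<Rightarrow> bool)
     \<Rightarrow> ((nat \<Rightarrow> 'r) \<Rightarrow> (nat \<Rightarrow> 'r)) \<Rightarrow> bool" where
  "odd_Smap phi r par H \<longleftrightarrow>
     (\<forall>x\<in>vecs r. H x \<in> vecs r) \<and>
     (\<forall>x\<in>vecs r. \<forall>y\<in>vecs r. H (\<lambda>i. x i + y i) = (\<lambda>i. H x i + H y i)) \<and>
     (\<forall>s. \<forall>x\<in>vecs r. H (\<lambda>i. phi s * x i) = (\<lambda>i. phi s * H x i)) \<and>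
     (\<forall>x\<in>vecs r. even_vec r par x \<longrightarrow> odd_vec r par (H x)) \<and>
     (\<forall>x\<in>vecs r. odd_vec r par x \<longrightarrow> even_vec r par (H x))"

definition odd_Smap_quot :: "('s::comm_ring_1 \<Rightarrow> 'r::comm_ring_1) \<Rightarrow> (nat \<Rightarrow> 'r) \<Rightarrow> nat \<Rightarrow> nat
     \<Rightarrow> (nat \<Rightarrow> bool) \<Rightarrow> ((nat \<Rightarrow> 'r) \<Rightarrow> (nat \<Rightarrow> 'r)) \<Rightarrow> bool" where
  "odd_Smap_quot phi t n r par H \<longleftrightarrow>
     (\<forall>x\<in>vecs r. H x \<in> vecs r) \<and>
     (\<forall>x\<in>vecs r. \<forall>y\<in>vecs r. qeq t n x y \<longrightarrow> qeq t n (H x) (H y)) \<and>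
     (\<forall>x\<in>vecs r. \<forall>y\<in>vecs r. qeq t n (H (\<lambda>i. x i + y i)) (\<lambda>i. H x i + H y i)) \<and>
     (\<forall>s. \<forall>x\<in>vecs r. qeq t n (H (\<lambda>i. phi s * x i)) (\<lambda>i. phi s * H x i)) \<and>
     (\<forall>x\<in>vecs r. even_vec r par x \<longrightarrow> (\<exists>y. qeq t n (H x) y \<and> odd_vec r par y)) \<and>
     (\<forall>x\<in>vecs r. odd_vec r par x \<longrightarrow> (\<exists>y. qeq t n (H x) y \<and> even_vec r par y))"

end

theory Submission
  imports Defs "HOL-Library.Function_Algebras"
begin

locale pert =
  fixes T :: "'v::ab_group_add set" and h d e P :: "'v \<Rightarrow> 'v" and N :: nat
  assumes T0: "0 \<in> T" and Tadd: "x \<in> T \<Longrightarrow> y \<in> T \<Longrightarrow> x + y \<in> T"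
    and Tneg: "x \<in> T \<Longrightarrow> - x \<in> T"
    and hT: "x \<in> T \<Longrightarrow> h x \<in> T" and dT: "x \<in> T \<Longrightarrow> d x \<in> T"
    and eT: "x \<in> T \<Longrightarrow> e x \<in> T" and PT: "x \<in> T \<Longrightarrow> P x \<in> T"
    and hadd: "x \<in> T \<Longrightarrow> y \<in> T \<Longrightarrow> h (x + y) = h x + h y"
    and dadd: "x \<in> T \<Longrightarrow> y \<in> T \<Longrightarrow> d (x + y) = d x + d y"
    and eadd: "x \<in> T \<Longrightarrow> y \<in> T \<Longrightarrow> e (x + y) = e x + e y"
    and I1: "x \<in> T \<Longrightarrow> e (h x) + h (e x) = P x - x"
    and I2: "x \<in> T \<Longrightarrow> d (e x) + e (d x) = 0"
    and hh: "x \<in> T \<Longrightarrow> h (h x) = 0"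
    and hdd: "x \<in> T \<Longrightarrow> h (d (d x)) = d (d (h x))"
    and nil: "x \<in> T \<Longrightarrow> ((h \<circ> d) ^^ Suc N) x = 0"
begin

lemma Tdiff: "x \<in> T \<Longrightarrow> y \<in> T \<Longrightarrow> x - y \<in> T"
  using Tadd Tneg by (metis diff_conv_add_uminus)

lemma add_hom_basics:
  assumes "\<And>x. x \<in> T \<Longrightarrow> f x \<in> T" "\<And>x y. x \<in> T \<Longrightarrow> y \<in> T \<Longrightarrow> f (x + y) = f x + f y"
  shows "f 0 = 0" "x \<in> T \<Longrightarrow> f (- x) = - f x" "x \<in> T \<Longrightarrow> y \<in> T \<Longrightarrow> f (x - y) = f x - f y"
proof -
  show f0: "f 0 = 0" using assms(2)[OF T0 T0] by simp
  have fn: "\<And>x. x \<in> T \<Longrightarrow> f (- x) = - f x"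
    using assms(2) Tneg f0 by (metis add.right_inverse add_eq_0_iff2)
  then show "x \<in> T \<Longrightarrow> f (- x) = - f x" by blast
  show "x \<in> T \<Longrightarrow> y \<in> T \<Longrightarrow> f (x - y) = f x - f y"
    using assms(2)[of x "-y"] Tneg fn[of y] by simp
qed

lemmas h0 = add_hom_basics(1)[OF hT hadd] and hneg = add_hom_basics(2)[OF hT hadd]
  and hdiff = add_hom_basics(3)[OF hT hadd]
lemmas d0 = add_hom_basics(1)[OF dT dadd] and dneg = add_hom_basics(2)[OF dT dadd]
  and ddiff = add_hom_basics(3)[OF dT dadd]
lemmas e0 = add_hom_basics(1)[OF eT eadd] and eneg = add_hom_basics(2)[OF eT eadd]
  and ediff = add_hom_basics(3)[OF eT eadd]

definition g where "g = h \<circ> d"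

lemma gT: "x \<in> T \<Longrightarrow> g x \<in> T" by (simp add: g_def hT dT)
lemma gadd: "x \<in> T \<Longrightarrow> y \<in> T \<Longrightarrow> g (x + y) = g x + g y"
  by (simp add: g_def dadd hadd dT)

lemma gpT: "x \<in> T \<Longrightarrow> (g ^^ m) x \<in> T"
  by (induction m) (auto simp: gT)
lemma gpadd: "x \<in> T \<Longrightarrow> y \<in> T \<Longrightarrow> (g ^^ m) (x + y) = (g ^^ m) x + (g ^^ m) y"
  by (induction m) (auto simp: gadd gpT)

lemmas gp0 = add_hom_basics(1)[OF gpT gpadd] and gpneg = add_hom_basics(2)[OF gpT gpadd]
  and gpdiff = add_hom_basics(3)[OF gpT gpadd]

lemma sumT: "finite F \<Longrightarrow> (\<And>i. i \<in> F \<Longrightarrow> f i \<in> T) \<Longrightarrow> sum f F \<in> T"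
  by (induction F rule: finite_induct) (auto simp: T0 Tadd)

lemma hom_sum:
  assumes "\<And>x. x \<in> T \<Longrightarrow> F x \<in> T" "\<And>x y. x \<in> T \<Longrightarrow> y \<in> T \<Longrightarrow> F (x + y) = F x + F y"
  shows "finite S \<Longrightarrow> (\<And>i. i \<in> S \<Longrightarrow> f i \<in> T) \<Longrightarrow> F (sum f S) = (\<Sum>i\<in>S. F (f i))"
proof (induction S rule: finite_induct)
  case empty then show ?case using add_hom_basics(1)[OF assms] by simp
next
  case (insert x S) then show ?case by (simp add: assms(2) sumT)
qed

definition A where "A y = (\<Sum>m\<le>N. (g ^^ m) y)"

lemma AT: "y \<in> T \<Longrightarrow> A y \<in> T" by (simp add: A_def sumT gpT)
lemma Aadd: "x \<in> T \<Longrightarrow> y \<in> T \<Longrightarrow> A (x + y) = A x + A y"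
  by (simp add: A_def gpadd sum.distrib)
lemmas A0 = add_hom_basics(1)[OF AT Aadd] and Aneg = add_hom_basics(2)[OF AT Aadd]
  and Adiff = add_hom_basics(3)[OF AT Aadd]

lemma gnil: "x \<in> T \<Longrightarrow> (g ^^ Suc N) x = 0" using nil by (simp add: g_def)

lemma gA: "y \<in> T \<Longrightarrow> g (A y) = A (g y)"
proof -
  assume y: "y \<in> T"
  have "g (A y) = (\<Sum>m\<le>N. g ((g ^^ m) y))" unfolding A_def
    by (rule hom_sum[OF gT gadd]) (auto simp: gpT y)
  also have "\<dots> = A (g y)" unfolding A_def by (simp add: funpow_swap1)
  finally show ?thesis .
qed

lemma Afix: "y \<in> T \<Longrightarrow> A y = y + g (A y)"
proof -
  assume y: "y \<in> T"
  have "g (A y) = (\<Sum>m\<le>N. g ((g ^^ m) y))" unfolding A_def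
    by (rule hom_sum[OF gT gadd]) (auto simp: gpT y)
  also have "\<dots> = (\<Sum>m\<le>N. (g ^^ Suc m) y)" by simp
  also have "\<dots> = (\<Sum>m\<le>Suc N. (g ^^ m) y) - y"
    using sum.atMost_Suc_shift[of "\<lambda>m. (g ^^ m) y" N] by simp
  also have "\<dots> = A y - y" using gnil[OF y] by (simp add: A_def)
  finally show ?thesis by simp
qed

lemma Ag: "y \<in> T \<Longrightarrow> A (g y) = A y - y"
  using Afix gA by (metis add_diff_cancel_left')

lemma fixu:
  assumes v: "v \<in> T" and y: "y \<in> T" and eq: "v = y + g v"
  shows "v = A y"
proof -
  have "\<And>k. v = (\<Sum>m\<le>k. (g ^^ m) y) + (g ^^ Suc k) v"
  proof -
    fix k show "v = (\<Sum>m\<le>k. (g ^^ m) y) + (g ^^ Suc k) v"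
    proof (induction k)
      case 0 then show ?case using eq by simp
    next
      case (Suc k)
      have "(g ^^ Suc k) v = (g ^^ Suc k) (y + g v)" using eq by simp
      also have "\<dots> = (g ^^ Suc k) y + (g ^^ Suc (Suc k)) v"
        using gpadd[OF y gT[OF v], of "Suc k"] by (simp only: funpow_Suc_right o_apply)
      finally show ?case using Suc by (simp add: add.assoc)
    qed
  qed
  from this[of N] show ?thesis using gnil[OF v] by (simp add: A_def)
qed

lemma Acomm:
  assumes FT: "\<And>x. x \<in> T \<Longrightarrow> F x \<in> T" and Fadd: "\<And>x y. x \<in> T \<Longrightarrow> y \<in> T \<Longrightarrow> F (x + y) = F x + F y"
    and Fh: "\<And>x. x \<in> T \<Longrightarrow> F (h x) = h (F x)" and Fd: "\<And>x. x \<in> T \<Longrightarrow> F (d x) = d (F x)"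
    and y: "y \<in> T"
  shows "F (A y) = A (F y)"
proof -
  have gp: "F ((g ^^ m) y) = (g ^^ m) (F y)" for m
  proof (induction m)
    case (Suc m)
    have w: "(g ^^ m) y \<in> T" by (rule gpT[OF y])
    show ?case using Suc Fh[OF dT[OF w]] Fd[OF w] by (simp add: g_def o_def)
  qed simp
  have "F (A y) = (\<Sum>m\<le>N. F ((g ^^ m) y))" unfolding A_def
    by (rule hom_sum[OF FT Fadd]) (auto simp: gpT y)
  then show ?thesis by (simp add: gp A_def)
qed

theorem L1:
  assumes z: "z \<in> T"
  defines "u \<equiv> A (h z)"
  defines "b \<equiv> z + d u"
  shows "e u + d u + A (h (e z)) + A (h (d z)) = A (P b) - z"
proof -
  have uT: "u \<in> T" unfolding u_def by (simp add: AT hT z)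
  have bT: "b \<in> T" unfolding b_def by (simp add: Tadd z dT uT)
  have hb: "h b = u"
    unfolding b_def using Afix[OF hT[OF z]] by (simp add: hadd z dT uT u_def[symmetric] g_def)
  have edu: "e (d u) = - d (e u)" using I2[OF uT] by (metis add.commute add_eq_0_iff2)
  have eb: "e b = e z - d (e u)"
    unfolding b_def using eadd[OF z dT[OF uT]] edu by simp
  have "e u = P b - b - h (e b)" using I1[OF bT] hb by (simp add: algebra_simps)
  also have "h (e b) = h (e z) - g (e u)" unfolding eb g_def
    by (simp add: hdiff eT z dT uT)
  finally have eufix: "e u = (P b - b - h (e z)) + g (e u)" by (simp add: algebra_simps)
  have eu: "e u = A (P b - b - h (e z))"
    using fixu[OF eT[OF uT] _ eufix] by (simp add: Tdiff PT bT hT eT z)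
  have gdu: "g (d u) = 0" unfolding g_def using hdd[OF uT] hh[OF bT] hb by (simp add: d0)
  have Adu: "A (d u) = d u" using Afix[OF dT[OF uT]] gA[OF dT[OF uT]] gdu A0 by simp
  have Ab: "A b = z + A (g z) + d u"
    unfolding b_def using Aadd[OF z dT[OF uT]] Adu Ag[OF z] by simp
  have "A (P b - b - h (e z)) = A (P b) - A b - A (h (e z))"
    by (simp add: Adiff Tdiff PT bT hT eT z)
  then show ?thesis using eu Ab by (simp add: g_def algebra_simps)
qed

theorem L2:
  assumes y: "y \<in> T" and hy: "h y = 0" and ey: "e y = 0"
  defines "v \<equiv> A y"
  shows "e v + d v = A (P (d v))"
proof -
  have vT: "v \<in> T" unfolding v_def by (simp add: AT y)
  have vfix: "v = y + h (d v)" unfolding v_def using Afix[OF y] by (simp add: g_def)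
  have hv: "h v = 0" using hadd[OF y hT[OF dT[OF vT]]] hy hh[OF dT[OF vT]] vfix by simp
  have "e v = e (h (d v))" using eadd[OF y hT[OF dT[OF vT]]] ey vfix by simp
  also have "\<dots> = P (d v) - d v - h (e (d v))" using I1[OF dT[OF vT]] by (simp add: algebra_simps)
  also have "e (d v) = - d (e v)" using I2[OF vT] by (metis add.commute add_eq_0_iff2)
  also have "h (- d (e v)) = - g (e v)" by (simp add: g_def hneg dT eT vT)
  finally have evfix: "e v = (P (d v) - d v) + g (e v)" by simp
  have ev: "e v = A (P (d v) - d v)"
    using fixu[OF eT[OF vT] _ evfix] by (simp add: Tdiff PT dT vT)
  have gdv: "g (d v) = 0" unfolding g_def using hdd[OF vT] hv by (simp add: d0)
  have Adv: "A (d v) = d v" using Afix[OF dT[OF vT]] gA[OF dT[OF vT]] gdv A0 by simp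
  show ?thesis using ev Adv by (simp add: Adiff PT dT vT)
qed

end

locale conc =
  fixes phi :: "'s::comm_ring_1 \<Rightarrow> 'r::comm_ring_1"
    and W :: 's
    and r :: nat and par :: "nat \<Rightarrow> bool" and D :: "nat \<Rightarrow> nat \<Rightarrow> 'r"
    and n :: nat and t :: "nat \<Rightarrow> 'r" and L :: "nat \<Rightarrow> nat \<Rightarrow> nat \<Rightarrow> 'r"
    and sigma :: "'r \<Rightarrow> nat set \<Rightarrow> 'r"
    and h :: "(nat set \<Rightarrow> 'r) \<Rightarrow> (nat set \<Rightarrow> 'r)"
  assumes hom: "is_ring_hom phi"
    and mf: "is_mf r par (phi W) D"
    and lam_odd: "\<forall>j<n. odd_matrix r par (L j)"
    and lam_htpy: "\<forall>j<n. \<forall>a<r. \<forall>b<r.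
          (\<Sum>k<r. L j a k * D k b) + (\<Sum>k<r. D a k * L j k b) = (if a = b then t j else 0)"
    and sig_kos: "\<forall>a. sigma a \<in> kos n \<and> homog 0 (sigma a)"
    and sig_wd: "\<forall>a b. in_tideal t n (a - b) \<longrightarrow> sigma a = sigma b"
    and sig_add: "\<forall>a b. sigma (a + b) = (\<lambda>B. sigma a B + sigma b B)"
    and sig_S: "\<forall>s a. sigma (phi s * a) = (\<lambda>B. phi s * sigma a B)"
    and sig_chain: "\<forall>a. kdelta t n (sigma a) = (\<lambda>_. 0)"
    and h_kos: "\<forall>k\<in>kos n. h k \<in> kos n"
    and h_deg: "\<forall>p. \<forall>k\<in>kos n. homog p k \<longrightarrow> homog (p + 1) (h k)"
    and h_add: "\<forall>k1\<in>kos n. \<forall>k2\<in>kos n. h (\<lambda>B. k1 B + k2 B) = (\<lambda>B. h k1 B + h k2 B)"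
    and h_S: "\<forall>s. \<forall>k\<in>kos n. h (\<lambda>B. phi s * k B) = (\<lambda>B. phi s * h k B)"
    and pi_sig: "\<forall>a. in_tideal t n (sigma a {} - a)"
    and sig_pi: "\<forall>k\<in>kos n. sigma (k {}) = (\<lambda>B. k B + kdelta t n (h k) B + h (kdelta t n k) B)"
    and hh: "\<forall>k\<in>kos n. h (h k) = (\<lambda>_. 0)"
    and h_sig: "\<forall>a. h (sigma a) = (\<lambda>_. 0)"
    and pi_h: "\<forall>k\<in>kos n. in_tideal t n (h k {})"
begin

definition sg :: "bool \<Rightarrow> 'r" where "sg b = (if b then -1 else 1)"

lemma sg_sq[simp]: "sg b * sg b = 1" by (simp add: sg_def)
lemma sg_sq2[simp]: "sg b * (sg b * x) = x" by (simp add: sg_def)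

lemma kos0[simp]: "(\<lambda>_. 0) \<in> kos n" by (simp add: kos_def)
lemma kos0'[simp]: "0 \<in> kos n" by (simp add: kos_def)
lemma kos_add[intro]: "(k1::nat set \<Rightarrow> 'r) \<in> kos n \<Longrightarrow> k2 \<in> kos n \<Longrightarrow> (\<lambda>B. k1 B + k2 B) \<in> kos n"
  by (simp add: kos_def)
lemma kos_plus[intro]: "(k1::nat set \<Rightarrow> 'r) \<in> kos n \<Longrightarrow> k2 \<in> kos n \<Longrightarrow> k1 + k2 \<in> kos n"
  by (simp add: kos_def)
lemma kos_uminus[intro]: "(k1::nat set \<Rightarrow> 'r) \<in> kos n \<Longrightarrow> - k1 \<in> kos n"
  by (simp add: kos_def)
lemma kos_minus[intro]: "(k1::nat set \<Rightarrow> 'r) \<in> kos n \<Longrightarrow> k2 \<in> kos n \<Longrightarrow> k1 - k2 \<in> kos n"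
  by (simp add: kos_def)
lemma kos_scal[intro]: "(k::nat set \<Rightarrow> 'r) \<in> kos n \<Longrightarrow> (\<lambda>B. c * k B) \<in> kos n"
  by (simp add: kos_def)
lemma kos_sum[intro]: "(\<And>j. j \<in> F \<Longrightarrow> (k j::nat set \<Rightarrow> 'r) \<in> kos n) \<Longrightarrow> (\<lambda>B. \<Sum>j\<in>F. c j * k j B) \<in> kos n"
  by (simp add: kos_def)
lemma kdelta_kos[intro]: "kdelta t n k \<in> kos n" by (simp add: kos_def kdelta_def)
lemma sig_kos'[intro]: "sigma a \<in> kos n" using sig_kos by blast
lemma h_kos'[intro]: "k \<in> kos n \<Longrightarrow> h k \<in> kos n" using h_kos by blast

lemma kdelta_sum: "kdelta t n (\<lambda>B. \<Sum>j\<in>F. c j * k j B) = (\<lambda>B. \<Sum>j\<in>F. c j * kdelta t n (k j) B)"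
  unfolding kdelta_def
  apply (rule ext)
  apply (simp add: sum_distrib_left sum_distrib_right mult_ac)
  apply (subst sum.swap)
  apply simp
  done

lemma kdelta_scal: "kdelta t n (\<lambda>B. c * k B) = (\<lambda>B. c * kdelta t n k B)"
  unfolding kdelta_def by (auto simp: sum_distrib_left algebra_simps intro!: ext)

lemma kdelta_plus: "kdelta t n (k1 + k2) = kdelta t n k1 + kdelta t n k2"
  unfolding kdelta_def by (auto simp: sum.distrib algebra_simps intro!: ext)

lemma h_plus: "k1 \<in> kos n \<Longrightarrow> k2 \<in> kos n \<Longrightarrow> h (k1 + k2) = h k1 + h k2"
  using h_add by (simp add: plus_fun_def)

lemma h0: "h (\<lambda>_. 0) = (\<lambda>_. 0)"
proof -
  have "h (\<lambda>_. 0) = h (\<lambda>_. 0) + h (\<lambda>_. 0)" using h_plus[of "\<lambda>_. 0" "\<lambda>_. 0"]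
    by (simp add: plus_fun_def)
  then show ?thesis by (simp add: fun_eq_iff)
qed

lemma h_uminus: "k \<in> kos n \<Longrightarrow> h (- k) = - h k"
  using h_plus[of k "-k"] h0 by (simp add: kos_uminus fun_eq_iff add_eq_0_iff2 zero_fun_def)

lemma h_sg: "k \<in> kos n \<Longrightarrow> h (\<lambda>B. sg b * k B) = (\<lambda>B. sg b * h k B)"
  using h_uminus[of k] by (auto simp: sg_def fun_eq_iff fun_Compl_def)

lemma h_sum: "finite F \<Longrightarrow> (\<And>j. j \<in> F \<Longrightarrow> k j \<in> kos n) \<Longrightarrow>
   h (\<lambda>B. \<Sum>j\<in>F. k j B) = (\<lambda>B. \<Sum>j\<in>F. h (k j) B)"
proof (induction F rule: finite_induct)
  case empty then show ?case using h0 by simp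
next
  case (insert x F)
  have "(\<lambda>B. \<Sum>j\<in>F. k j B) \<in> kos n" using insert kos_sum[of F k "\<lambda>_. 1"] by simp
  then show ?case using insert h_add by simp
qed

abbreviation w where "w \<equiv> phi W"
abbreviation hO where "hO \<equiv> hT r par h"
abbreviation dO where "dO \<equiv> dT r D"
definition eO :: "(nat \<Rightarrow> nat set \<Rightarrow> 'r) \<Rightarrow> nat \<Rightarrow> nat set \<Rightarrow> 'r" where
  "eO z = (\<lambda>i B. if i < r then sg (par i) * kdelta t n (z i) B else 0)"
definition PO :: "(nat \<Rightarrow> nat set \<Rightarrow> 'r) \<Rightarrow> nat \<Rightarrow> nat set \<Rightarrow> 'r" where
  "PO z = sigT r sigma (\<lambda>i. z i {})"
definition TT :: "(nat \<Rightarrow> nat set \<Rightarrow> 'r) set" where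
  "TT = {z. (\<forall>i. z i \<in> kos n) \<and> (\<forall>i\<ge>r. z i = 0)}"

lemma hO_def: "hO z = (\<lambda>i B. if i < r then sg (par i) * h (z i) B else 0)"
  unfolding hT_def sg_def by (simp add: fun_eq_iff)

lemma TTD: "z \<in> TT \<Longrightarrow> z i \<in> kos n" "z \<in> TT \<Longrightarrow> \<not> i < r \<Longrightarrow> z i B = 0"
  by (auto simp: TT_def)

lemma TTI: "(\<And>i. z i \<in> kos n) \<Longrightarrow> (\<And>i B. \<not> i < r \<Longrightarrow> z i B = 0) \<Longrightarrow> z \<in> TT"
  by (auto simp: TT_def fun_eq_iff)

lemma kosI: "(\<And>B. \<not> B \<subseteq> {..<n} \<Longrightarrow> k B = 0) \<Longrightarrow> k \<in> kos n"
  by (auto simp: kos_def)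
lemma kosD: "k \<in> kos n \<Longrightarrow> \<not> B \<subseteq> {..<n} \<Longrightarrow> k B = 0"
  by (auto simp: kos_def)

lemma odd_D: "odd_matrix r par D" using mf by (simp add: is_mf_def)
lemma odd_DD: "i < r \<Longrightarrow> j < r \<Longrightarrow> D i j \<noteq> 0 \<Longrightarrow> par j = (\<not> par i)"
  using odd_D by (auto simp: odd_matrix_def)

lemma hO_TT: assumes z: "z \<in> TT" shows "hO z \<in> TT"
proof (rule TTI)
  fix i show "hO z i \<in> kos n"
  proof (rule kosI)
    fix B assume "\<not> B \<subseteq> {..<n}"
    then show "hO z i B = 0" using kosD[OF h_kos'[OF TTD(1)[OF z]]] by (simp add: hO_def)
  qed
qed (simp add: hO_def)
lemma dO_TT: assumes z: "z \<in> TT" shows "dO z \<in> TT"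
proof (rule TTI)
  fix i show "dO z i \<in> kos n"
  proof (rule kosI)
    fix B assume "\<not> B \<subseteq> {..<n}"
    then show "dO z i B = 0" using kosD[OF TTD(1)[OF z]] by (simp add: dT_def)
  qed
qed (simp add: dT_def)
lemma eO_TT: assumes z: "z \<in> TT" shows "eO z \<in> TT"
proof (rule TTI)
  fix i show "eO z i \<in> kos n"
  proof (rule kosI)
    fix B assume "\<not> B \<subseteq> {..<n}"
    then show "eO z i B = 0" using kosD[OF kdelta_kos] by (simp add: eO_def)
  qed
qed (simp add: eO_def)
lemma PO_TT: assumes z: "z \<in> TT" shows "PO z \<in> TT"
proof (rule TTI)
  fix i show "PO z i \<in> kos n"
  proof (rule kosI)
    fix B assume "\<not> B \<subseteq> {..<n}"
    then show "PO z i B = 0" using kosD[OF sig_kos'] by (simp add: PO_def sigT_def)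
  qed
qed (simp add: PO_def sigT_def)

lemma TT0: "0 \<in> TT" by (rule TTI) auto
lemma TTadd: "x \<in> TT \<Longrightarrow> y \<in> TT \<Longrightarrow> x + y \<in> TT"
  unfolding TT_def by (auto intro: kos_plus)
lemma TTneg: "x \<in> TT \<Longrightarrow> - x \<in> TT"
  unfolding TT_def by (auto intro: kos_uminus)

lemma hO_add: "x \<in> TT \<Longrightarrow> y \<in> TT \<Longrightarrow> hO (x + y) = hO x + hO y"
  by (auto simp: hO_def h_plus TTD algebra_simps intro!: ext)
lemma dO_add: "x \<in> TT \<Longrightarrow> y \<in> TT \<Longrightarrow> dO (x + y) = dO x + dO y"
  by (auto simp: dT_def sum.distrib algebra_simps intro!: ext)
lemma eO_add: "x \<in> TT \<Longrightarrow> y \<in> TT \<Longrightarrow> eO (x + y) = eO x + eO y"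
  by (auto simp: eO_def kdelta_plus algebra_simps intro!: ext)

lemma I1c: "z \<in> TT \<Longrightarrow> eO (hO z) + hO (eO z) = PO z - z"
proof (rule ext, rule ext)
  fix i B assume z: "z \<in> TT"
  show "(eO (hO z) + hO (eO z)) i B = (PO z - z) i B"
  proof (cases "i < r")
    case True
    have "(eO (hO z) + hO (eO z)) i B = kdelta t n (h (z i)) B + h (kdelta t n (z i)) B"
      using True by (simp add: eO_def hO_def kdelta_scal h_sg[OF kdelta_kos] mult.assoc[symmetric])
    also have "\<dots> = sigma (z i {}) B - z i B" using sig_pi TTD(1)[OF z, of i] by simp
    finally show ?thesis using True by (simp add: PO_def sigT_def)
  qed (simp add: eO_def hO_def PO_def sigT_def TTD(2)[OF z])
qed

lemma I2c: "z \<in> TT \<Longrightarrow> dO (eO z) + eO (dO z) = 0"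
proof (rule ext, rule ext)
  fix i B assume z: "z \<in> TT"
  show "(dO (eO z) + eO (dO z)) i B = (0::nat \<Rightarrow> nat set \<Rightarrow> 'r) i B"
  proof (cases "i < r")
    case True
    have "eO (dO z) i B = sg (par i) * (\<Sum>j<r. D i j * kdelta t n (z j) B)"
      using True kdelta_sum[of "\<lambda>j. D i j" z "{..<r}"] by (simp add: eO_def dT_def)
    moreover have "dO (eO z) i B = (\<Sum>j<r. D i j * (sg (par j) * kdelta t n (z j) B))"
      using True by (simp add: eO_def dT_def)
    moreover have "(\<Sum>j<r. D i j * (sg (par j) * kdelta t n (z j) B)) =
        (\<Sum>j<r. - (sg (par i) * (D i j * kdelta t n (z j) B)))"
    proof (rule sum.cong)
      fix j assume "j \<in> {..<r}"
      then show "D i j * (sg (par j) * kdelta t n (z j) B) = - (sg (par i) * (D i j * kdelta t n (z j) B))"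
        using odd_DD[OF True, of j] by (cases "D i j = 0") (auto simp: sg_def)
    qed simp
    ultimately show ?thesis by (simp add: sum_negf sum_distrib_left)
  qed (simp add: eO_def dT_def)
qed

lemma hhc: "z \<in> TT \<Longrightarrow> hO (hO z) = 0"
  by (auto simp: hO_def h_sg[OF h_kos'[OF TTD(1)]] hh TTD(1) intro!: ext)

lemma DD: "i < r \<Longrightarrow> k < r \<Longrightarrow> (\<Sum>j<r. D i j * D j k) = (if i = k then w else 0)"
  using mf by (simp add: is_mf_def)

lemma ddc: "z \<in> TT \<Longrightarrow> dO (dO z) = (\<lambda>i B. w * z i B)"
proof (rule ext, rule ext)
  fix i B assume z: "z \<in> TT"
  show "dO (dO z) i B = w * z i B"
  proof (cases "i < r")
    case True
    have "dO (dO z) i B = (\<Sum>j<r. D i j * (\<Sum>k<r. D j k * z k B))"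
      using True by (simp add: dT_def)
    also have "\<dots> = (\<Sum>k<r. (\<Sum>j<r. D i j * D j k) * z k B)"
      by (simp add: sum_distrib_left sum_distrib_right mult.assoc) (rule sum.swap)
    also have "\<dots> = (\<Sum>k<r. (if i = k then w else 0) * z k B)"
      using DD[OF True] by simp
    also have "\<dots> = (\<Sum>k<r. if i = k then w * z k B else 0)" by (rule sum.cong) auto
    also have "\<dots> = w * z i B" using True by simp
    finally show ?thesis .
  qed (simp add: dT_def TTD(2)[OF z])
qed

lemma hddc: assumes z: "z \<in> TT" shows "hO (dO (dO z)) = dO (dO (hO z))"
  unfolding ddc[OF z] ddc[OF hO_TT[OF z]]
  using h_S TTD(1)[OF z] by (simp add: hO_def fun_eq_iff)

section \<open>supports\<close>

definition supp :: "nat set \<Rightarrow> (nat set \<Rightarrow> 'r) \<Rightarrow> bool" where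
  "supp S k \<longleftrightarrow> (\<forall>B. k B \<noteq> 0 \<longrightarrow> card B \<in> S)"

lemma kos_card: "k \<in> kos n \<Longrightarrow> k B \<noteq> 0 \<Longrightarrow> card B \<le> n"
  using kosD[of k B] card_mono[of "{..<n}" B] by fastforce

lemma h_supp:
  assumes k: "k \<in> kos n" and s: "supp S k"
  shows "supp (Suc ` S) (h k)"
proof -
  define F where "F = S \<inter> {..n}"
  define kp where "kp p = (\<lambda>B. if card B = p then k B else 0)" for p
  have kpk: "kp p \<in> kos n" for p
    by (rule kosI) (simp add: kp_def kosD[OF k])
  have kpd: "homog p (kp p)" for p by (simp add: homog_def kp_def)
  have keq: "k = (\<lambda>B. \<Sum>p\<in>F. kp p B)"
  proof
    fix B
    have "(\<Sum>p\<in>F. kp p B) = (if card B \<in> F then k B else 0)"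
      unfolding kp_def by (simp add: sum.delta' F_def)
    then show "k B = (\<Sum>p\<in>F. kp p B)" using s kos_card[OF k, of B]
      by (auto simp: supp_def F_def)
  qed
  have "h k = (\<lambda>B. \<Sum>p\<in>F. h (kp p) B)"
    by (subst keq, rule h_sum) (auto simp: F_def kpk)
  moreover have "homog (p + 1) (h (kp p))" for p using h_deg kpk kpd by blast
  ultimately show ?thesis
    unfolding supp_def
    by (auto simp: homog_def F_def elim!: sum.not_neutral_contains_not_neutral)
qed

lemma supp_mono: "supp S k \<Longrightarrow> S \<subseteq> S' \<Longrightarrow> supp S' k" by (auto simp: supp_def)

lemma supp_zero_top: assumes k: "k \<in> kos n" and s: "supp {Suc n..} k" shows "k = 0"
proof (rule ext)
  fix B show "k B = 0 B"
  proof (rule ccontr)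
    assume "k B \<noteq> 0 B"
    then have nz: "k B \<noteq> 0" by simp
    have "card B \<le> n" by (rule kos_card[OF k nz])
    moreover have "card B \<in> {Suc n..}" using s nz by (simp add: supp_def)
    ultimately show False by simp
  qed
qed

lemma hO_supp: assumes z: "z \<in> TT" and s: "\<And>i. supp S (z i)" shows "supp (Suc ` S) (hO z i)"
proof -
  have "supp (Suc ` S) (h (z i))" by (rule h_supp[OF TTD(1)[OF z] s])
  then show ?thesis unfolding supp_def hO_def by (simp add: sg_def)
qed

lemma dO_supp: assumes s: "\<And>i. supp S (z i)" shows "supp S (dO z i)"
  unfolding supp_def
proof (intro allI impI)
  fix B assume "dO z i B \<noteq> 0"
  then obtain j where "z j B \<noteq> 0"
    by (auto simp: dT_def split: if_splits elim!: sum.not_neutral_contains_not_neutral) (metis mult_zero_right)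
  then show "card B \<in> S" using s[of j] by (simp add: supp_def)
qed

lemma gp_TT: "z \<in> TT \<Longrightarrow> ((hO \<circ> dO) ^^ m) z \<in> TT"
  by (induction m) (auto simp: hO_TT dO_TT)

lemma gp_supp: assumes z: "z \<in> TT" shows "supp {m..} (((hO \<circ> dO) ^^ m) z i)"
proof (induction m arbitrary: i)
  case 0 then show ?case by (simp add: supp_def)
next
  case (Suc m)
  have "supp {m..} (dO (((hO \<circ> dO) ^^ m) z) j)" for j by (rule dO_supp[OF Suc])
  then have "supp (Suc ` {m..}) (hO (dO (((hO \<circ> dO) ^^ m) z)) i)"
    by (rule hO_supp[OF dO_TT[OF gp_TT[OF z]]])
  then have "supp {Suc m..} (hO (dO (((hO \<circ> dO) ^^ m) z)) i)"
    by (rule supp_mono) auto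
  then show ?case by (metis comp_apply funpow.simps(2))
qed

lemma nilc: assumes z: "z \<in> TT" shows "((hO \<circ> dO) ^^ Suc n) z = 0"
proof (rule ext)
  fix i show "((hO \<circ> dO) ^^ Suc n) z i = 0 i"
    using supp_zero_top[OF TTD(1)[OF gp_TT[OF z]] gp_supp[OF z]] by simp
qed

sublocale P: pert TT hO dO eO PO n
  by unfold_locales (auto simp: TT0 TTadd TTneg hO_TT dO_TT eO_TT PO_TT hO_add dO_add eO_add
      I1c I2c hhc hddc nilc[simplified])

lemma mv_vecs[simp]: "mv r M x \<in> vecs r" by (simp add: mv_def vecs_def)
lemma vecsD: "x \<in> vecs r \<Longrightarrow> \<not> i < r \<Longrightarrow> x i = 0" by (simp add: vecs_def)
lemma vecs_add[intro]: "(x::nat\<Rightarrow>'r) \<in> vecs r \<Longrightarrow> y \<in> vecs r \<Longrightarrow> (\<lambda>i. x i + y i) \<in> vecs r"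
  by (simp add: vecs_def)
lemma vecs_plus[intro]: "(x::nat\<Rightarrow>'r) \<in> vecs r \<Longrightarrow> y \<in> vecs r \<Longrightarrow> x + y \<in> vecs r"
  by (simp add: vecs_def)
lemma vecs_minus[intro]: "(x::nat\<Rightarrow>'r) \<in> vecs r \<Longrightarrow> y \<in> vecs r \<Longrightarrow> x - y \<in> vecs r"
  by (simp add: vecs_def)
lemma vecs_scal[intro]: "(x::nat\<Rightarrow>'r) \<in> vecs r \<Longrightarrow> (\<lambda>i. c * x i) \<in> vecs r"
  by (simp add: vecs_def)

lemma mv_add: "mv r M (x + y) = mv r M x + mv r M y"
  by (simp add: mv_def sum.distrib algebra_simps fun_eq_iff)
lemma mv_scal: "mv r M (\<lambda>i. c * x i) = (\<lambda>i. c * mv r M x i)"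
  by (simp add: mv_def sum_distrib_left algebra_simps fun_eq_iff)
lemma mv_diff: "mv r M (x - y) = mv r M x - mv r M y"
  by (simp add: mv_def sum_subtractf algebra_simps fun_eq_iff)

lemma lam_d:
  assumes k: "k < n" and x: "x \<in> vecs r"
  shows "mv r D (mv r (L k) x) = (\<lambda>i. t k * x i) - mv r (L k) (mv r D x)"
proof (rule ext)
  fix i show "mv r D (mv r (L k) x) i = ((\<lambda>i. t k * x i) - mv r (L k) (mv r D x)) i"
  proof (cases "i < r")
    case True
    have sw: "\<And>M1 M2. (\<Sum>j<r. M1 j * (\<Sum>b<r. M2 j b * x b)) = (\<Sum>b<r. (\<Sum>j<r. M1 j * M2 j b) * x b)"
      by (simp add: sum_distrib_left sum_distrib_right mult.assoc) (rule sum.swap)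
    have "mv r D (mv r (L k) x) i + mv r (L k) (mv r D x) i
        = (\<Sum>j<r. D i j * (\<Sum>b<r. L k j b * x b)) + (\<Sum>j<r. L k i j * (\<Sum>b<r. D j b * x b))"
      using True by (simp add: mv_def)
    also have "\<dots> = (\<Sum>b<r. ((\<Sum>j<r. L k i j * D j b) + (\<Sum>j<r. D i j * L k j b)) * x b)"
      by (simp add: sw distrib_right sum.distrib)
    also have "\<dots> = (\<Sum>b<r. (if i = b then t k else 0) * x b)"
      using lam_htpy k True by simp
    also have "\<dots> = (\<Sum>b<r. if i = b then t k * x b else 0)" by (rule sum.cong) auto
    also have "\<dots> = t k * x i" using True by simp
    finally show ?thesis by (simp add: algebra_simps)
  qed (simp add: mv_def vecsD[OF x])
qed

fun lp :: "nat set \<Rightarrow> nat \<Rightarrow> (nat \<Rightarrow> 'r) \<Rightarrow> nat \<Rightarrow> 'r" where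
  "lp C 0 x = x"
| "lp C (Suc k) x = lp C k (if k \<in> C then mv r (L k) x else x)"

lemma lp_vecs: "x \<in> vecs r \<Longrightarrow> lp C k x \<in> vecs r"
  by (induction k arbitrary: x) auto
lemma lp_add: "lp C k (x + y) = lp C k x + lp C k y"
  by (induction k arbitrary: x y) (auto simp: mv_add)
lemma lp_scal: "lp C k (\<lambda>i. c * x i) = (\<lambda>i. c * lp C k x i)"
  by (induction k arbitrary: x) (auto simp: mv_scal)
lemma lp_diff: "lp C k (x - y) = lp C k x - lp C k y"
  by (induction k arbitrary: x y) (auto simp: mv_diff)
lemma lp_cong: "C \<inter> {..<k} = C' \<inter> {..<k} \<Longrightarrow> lp C k x = lp C' k x"
proof (induction k arbitrary: x)
  case (Suc k)
  have a: "C \<inter> {..<k} = (C \<inter> {..<Suc k}) \<inter> {..<k}" "C' \<inter> {..<k} = (C' \<inter> {..<Suc k}) \<inter> {..<k}"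
    by auto
  have "C \<inter> {..<k} = C' \<inter> {..<k}" unfolding a Suc.prems ..
  moreover have "(k \<in> C) = (k \<in> C')"
  proof -
    have "(k \<in> C \<inter> {..<Suc k}) = (k \<in> C' \<inter> {..<Suc k})" unfolding Suc.prems ..
    then show ?thesis by simp
  qed
  ultimately show ?case using Suc.IH by simp
qed simp
lemma lp_empty: "lp {} k x = x" by (induction k arbitrary: x) auto

lemma lamprod_lp: "lamprod r L k x = lp {..<k} k x"
proof (induction k arbitrary: x)
  case (Suc k)
  have "lp {..<Suc k} k y = lp {..<k} k y" for y by (rule lp_cong) auto
  then show ?case using Suc by simp
qed simp

lemma lp_d:
  assumes C: "C \<subseteq> {..<n}" and x: "x \<in> vecs r"
  shows "mv r D (lp C k x) = (\<lambda>i. (\<Sum>j\<in>C \<inter> {..<k}. (-1) ^ card {c\<in>C. c < j} * t j * lp (C - {j}) k x i)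
          + (-1) ^ card (C \<inter> {..<k}) * lp C k (mv r D x) i)"
  using x
proof (induction k arbitrary: x)
  case 0 then show ?case by simp
next
  case (Suc k)
  show ?case
  proof (cases "k \<in> C")
    case True
    have kn: "k < n" using True C by auto
    define x' where "x' = mv r (L k) x"
    have x'v: "x' \<in> vecs r" by (simp add: x'_def)
    have IH: "mv r D (lp C k x') = (\<lambda>i. (\<Sum>j\<in>C \<inter> {..<k}. (-1) ^ card {c\<in>C. c < j} * t j * lp (C - {j}) k x' i)
          + (-1) ^ card (C \<inter> {..<k}) * lp C k (mv r D x') i)" by (rule Suc.IH[OF x'v])
    have e1: "lp (C - {j}) k x' = lp (C - {j}) (Suc k) x" if "j \<in> C \<inter> {..<k}" for j
      using that True by (simp add: x'_def)
    have e2: "lp C k (mv r D x') = (\<lambda>i. t k * lp (C - {k}) (Suc k) x i) - lp C (Suc k) (mv r D x)"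
    proof -
      have "lp C k (mv r D x') = lp C k ((\<lambda>i. t k * x i) - mv r (L k) (mv r D x))"
        unfolding x'_def using lam_d[OF kn Suc.prems] by simp
      also have "\<dots> = (\<lambda>i. t k * lp C k x i) - lp C k (mv r (L k) (mv r D x))"
        by (simp add: lp_diff lp_scal)
      also have "lp C k x = lp (C - {k}) (Suc k) x"
        by (simp, rule lp_cong, auto)
      also have "lp C k (mv r (L k) (mv r D x)) = lp C (Suc k) (mv r D x)" using True by simp
      finally show ?thesis .
    qed
    have s1: "\<And>i. (\<Sum>j\<in>C \<inter> {..<k}. (-1) ^ card {c\<in>C. c < j} * t j * lp (C - {j}) k x' i)
       = (\<Sum>j\<in>C \<inter> {..<k}. (-1) ^ card {c\<in>C. c < j} * t j * lp (C - {j}) (Suc k) x i)"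
      by (rule sum.cong[OF refl], subst e1, assumption, rule refl)
    have fin: "finite (C \<inter> {..<k})" by simp
    have ins: "C \<inter> {..<Suc k} = insert k (C \<inter> {..<k})" using True by auto
    have cardk: "card {c\<in>C. c < k} = card (C \<inter> {..<k})"
      by (rule arg_cong[where f=card]) auto
    have cins: "card (C \<inter> {..<Suc k}) = Suc (card (C \<inter> {..<k}))" unfolding ins
      using fin by (simp add: card_insert_if)
    have "mv r D (lp C (Suc k) x) = mv r D (lp C k x')" using True by (simp add: x'_def)
    also have "\<dots> = (\<lambda>i. (\<Sum>j\<in>C \<inter> {..<k}. (-1) ^ card {c\<in>C. c < j} * t j * lp (C - {j}) (Suc k) x i)
          + (-1) ^ card (C \<inter> {..<k}) * (t k * lp (C - {k}) (Suc k) x i - lp C (Suc k) (mv r D x) i))"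
      unfolding IH e2 s1 by (simp del: lp.simps)
    also have "\<dots> = (\<lambda>i. (\<Sum>j\<in>C \<inter> {..<Suc k}. (-1) ^ card {c\<in>C. c < j} * t j * lp (C - {j}) (Suc k) x i)
          + (-1) ^ card (C \<inter> {..<Suc k}) * lp C (Suc k) (mv r D x) i)"
      unfolding ins cins using fin by (simp add: cardk[symmetric] algebra_simps del: lp.simps)
    finally show ?thesis unfolding ins .
  next
    case False
    have e1: "lp (C - {j}) (Suc k) x = lp (C - {j}) k x" for j using False by simp
    have ins: "C \<inter> {..<Suc k} = C \<inter> {..<k}" using False by (auto simp: less_Suc_eq)
    show ?thesis using Suc.IH[OF Suc.prems] False by (simp add: e1 ins)
  qed
qed

section \<open>The map Phi\<close>

definition tri :: "nat \<Rightarrow> nat" where "tri m = m * (m + 1) div 2"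

lemma tri_Suc: "tri (Suc m) = tri m + Suc m"
proof -
  have "Suc m * (Suc m + 1) = m * (m + 1) + 2 * Suc m" by simp
  then show ?thesis unfolding tri_def by simp
qed

lemma neg1_odd: "odd (a + b) \<Longrightarrow> (-1::'r) ^ a = - ((-1) ^ b)"
  by (auto simp: minus_one_power_iff)
lemma neg1_even: "even (a + b) \<Longrightarrow> (-1::'r) ^ a = (-1) ^ b"
  by (auto simp: minus_one_power_iff)

definition sgnB :: "nat set \<Rightarrow> 'r" where
  "sgnB B = (-1) ^ (\<Sum>B + tri (card B) + n)"
definition rho :: "nat \<Rightarrow> nat set \<Rightarrow> 'r" where
  "rho i B = (if par i then (-1) ^ card B else 1)"
definition Phi :: "(nat \<Rightarrow> 'r) \<Rightarrow> nat \<Rightarrow> nat set \<Rightarrow> 'r" where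
  "Phi x = (\<lambda>i B. if i < r \<and> B \<subseteq> {..<n} then sgnB B * rho i B * lp ({..<n} - B) n x i else 0)"

lemma sum_lessThan_tri: "even (\<Sum>{..<k} + tri k + k)"
proof (induction k)
  case (Suc k)
  have "\<Sum>{..<Suc k} + tri (Suc k) + Suc k = (\<Sum>{..<k} + tri k + k) + 2 * Suc k"
    by (simp add: tri_Suc)
  then show ?case using Suc.IH by (metis dvd_add dvd_triv_left)
qed (simp add: tri_def)

lemma sgnB_top: "sgnB {..<n} = 1"
  unfolding sgnB_def using sum_lessThan_tri[of n] by (simp add: minus_one_power_iff)

lemma card_split:
  assumes B: "B \<subseteq> {..<n}" and j: "j < n"
  shows "card {b\<in>B. b < j} + card {c\<in>{..<n} - B. c < j} = j"
proof -
  have "{b\<in>B. b < j} \<union> {c\<in>{..<n} - B. c < j} = {..<j}" using B j by auto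
  moreover have "{b\<in>B. b < j} \<inter> {c\<in>{..<n} - B. c < j} = {}" by auto
  moreover have "finite {b\<in>B. b < j}" "finite {c\<in>{..<n} - B. c < j}" by auto
  ultimately show ?thesis by (metis card_Un_disjoint card_lessThan)
qed

lemma sign_cancel:
  assumes B: "B \<subseteq> {..<n}" and j: "j < n" "j \<notin> B"
  shows "(-1) ^ card {b\<in>B. b < j} * sgnB (insert j B)
       = - (sgnB B * (-1) ^ card B * (-1) ^ card {c\<in>{..<n} - B. c < j})"
proof -
  have fB: "finite B" using B finite_subset by blast
  define a where "a = card {b\<in>B. b < j}"
  define c where "c = card {c\<in>{..<n} - B. c < j}"
  have ac: "a + c = j" unfolding a_def c_def by (rule card_split[OF B j(1)])
  have s1: "\<Sum>(insert j B) = \<Sum>B + j" using fB j by simp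
  have s2: "card (insert j B) = Suc (card B)" using fB j by simp
  have "(-1) ^ a * sgnB (insert j B) = (-1::'r) ^ (a + (\<Sum>B + j + (tri (card B) + Suc (card B)) + n))"
    unfolding sgnB_def s1 s2 tri_Suc by (simp add: power_add)
  also have "\<dots> = - ((-1) ^ ((\<Sum>B + tri (card B) + n) + card B + c))"
  proof (rule neg1_odd)
    have "a + (\<Sum>B + j + (tri (card B) + Suc (card B)) + n) + ((\<Sum>B + tri (card B) + n) + card B + c)
        = 2 * (j + \<Sum>B + tri (card B) + n + card B) + 1" using ac by simp
    then show "odd (a + (\<Sum>B + j + (tri (card B) + Suc (card B)) + n) + ((\<Sum>B + tri (card B) + n) + card B + c))"
      by presburger
  qed
  also have "\<dots> = - (sgnB B * (-1) ^ card B * (-1) ^ c)" unfolding sgnB_def by (simp add: power_add)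
  finally show ?thesis unfolding a_def c_def .
qed

lemma Phi_TT: "Phi x \<in> TT"
  by (rule TTI; (rule kosI)?; simp add: Phi_def)

lemma Phi_add: "Phi (x + y) = Phi x + Phi y"
  by (simp add: Phi_def lp_add algebra_simps fun_eq_iff)
lemma Phi_scal: "Phi (\<lambda>i. c * x i) = (\<lambda>i B. c * Phi x i B)"
  by (simp add: Phi_def lp_scal algebra_simps fun_eq_iff)

lemma Phi_eps: assumes x: "x \<in> vecs r" shows "epsT r par n (Phi x) = x"
proof (rule ext)
  fix i show "epsT r par n (Phi x) i = x i"
    by (cases "i < r") (auto simp: epsT_def Phi_def sgnB_top rho_def lp_empty vecsD[OF x]
        power_mult_distrib[symmetric] simp flip: power_add mult_2)
qed

lemma Phi_pi: assumes x: "x \<in> vecs r" shows "(\<lambda>i. Phi x i {}) = theta r n L x"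
proof (rule ext)
  fix i show "Phi x i {} = theta r n L x i"
    using vecsD[OF lp_vecs[OF x], of _ "{..<n}" n]
    by (cases "i < r") (auto simp: theta_def Phi_def sgnB_def rho_def lamprod_lp tri_def)
qed

lemma Phi_chain:
  assumes x: "x \<in> vecs r"
  shows "eO (Phi x) + dO (Phi x) = Phi (\<lambda>i. (-1) ^ n * mv r D x i)"
proof (rule ext, rule ext)
  fix i B
  show "(eO (Phi x) + dO (Phi x)) i B = Phi (\<lambda>i. (-1) ^ n * mv r D x i) i B"
  proof (cases "i < r \<and> B \<subseteq> {..<n}")
    case False
    then show ?thesis by (auto simp: eO_def dT_def Phi_def kdelta_def)
  next
    case True
    then have ir: "i < r" and B: "B \<subseteq> {..<n}" by auto
    define C where "C = {..<n} - B"
    define m where "m = card B"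
    define K where "K = sgnB B * (-1) ^ m * rho i B"
    have fB: "finite B" using B finite_subset by blast
    have mn: "m \<le> n" unfolding m_def using card_mono[OF _ B] by simp
    have cC: "card C = n - m" unfolding C_def m_def using B fB by (simp add: card_Diff_subset)
    have CC: "C \<inter> {..<n} = C" unfolding C_def by auto
    have E: "eO (Phi x) i B = (\<Sum>j\<in>C. - (K * (-1) ^ card {c\<in>C. c < j}) * t j * lp (C - {j}) n x i)"
    proof -
      have "eO (Phi x) i B = sg (par i) * (\<Sum>j\<in>C. (-1) ^ card {b\<in>B. b < j} * t j *
          (sgnB (insert j B) * rho i (insert j B) * lp (C - {j}) n x i))"
      proof -
        have "eO (Phi x) i B = sg (par i) * (\<Sum>j\<in>C. (-1) ^ card {b\<in>B. b < j} * t j * Phi x i (insert j B))"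
          using ir B by (simp add: eO_def kdelta_def C_def)
        moreover have "Phi x i (insert j B) = sgnB (insert j B) * rho i (insert j B) * lp (C - {j}) n x i"
          if "j \<in> C" for j
        proof -
          have "insert j B \<subseteq> {..<n}" using that B C_def by auto
          moreover have "{..<n} - insert j B = C - {j}" unfolding C_def by auto
          ultimately show ?thesis using ir by (simp add: Phi_def)
        qed
        ultimately show ?thesis by (simp cong: sum.cong)
      qed
      also have "\<dots> = (\<Sum>j\<in>C. rho i B * ((-1) ^ card {b\<in>B. b < j} * sgnB (insert j B)) * t j * lp (C - {j}) n x i)"
      proof -
        have rr: "rho i (insert j B) = sg (par i) * rho i B" if "j \<in> C" for j
          using that fB unfolding C_def by (auto simp: sg_def rho_def)
        show ?thesis unfolding sum_distrib_left
        proof (rule sum.cong[OF refl])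
          fix j assume "j \<in> C"
          then show "sg (par i) * ((-1) ^ card {b\<in>B. b < j} * t j *
            (sgnB (insert j B) * rho i (insert j B) * lp (C - {j}) n x i)) =
            rho i B * ((-1) ^ card {b\<in>B. b < j} * sgnB (insert j B)) * t j * lp (C - {j}) n x i"
            by (simp add: rr mult_ac)
        qed
      qed
      also have "\<dots> = (\<Sum>j\<in>C. - (K * (-1) ^ card {c\<in>C. c < j}) * t j * lp (C - {j}) n x i)"
      proof (rule sum.cong[OF refl])
        fix j assume j: "j \<in> C"
        have "(-1) ^ card {b\<in>B. b < j} * sgnB (insert j B)
           = - (sgnB B * (-1) ^ card B * (-1) ^ card {c\<in>C. c < j})"
          unfolding C_def by (rule sign_cancel[OF B]) (use j C_def in auto)
        then show "rho i B * ((-1) ^ card {b\<in>B. b < j} * sgnB (insert j B)) * t j * lp (C - {j}) n x i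
            = - (K * (-1) ^ card {c\<in>C. c < j}) * t j * lp (C - {j}) n x i"
          unfolding K_def m_def by (simp add: algebra_simps)
      qed
      finally show ?thesis .
    qed
    have Dp: "dO (Phi x) i B = K * mv r D (lp C n x) i"
    proof -
      have "dO (Phi x) i B = (\<Sum>k<r. D i k * (sgnB B * rho k B * lp C n x k))"
        using ir B unfolding dT_def Phi_def C_def by (auto intro!: sum.cong)
      also have "\<dots> = (\<Sum>k<r. K * (D i k * lp C n x k))"
      proof (rule sum.cong[OF refl])
        fix k assume k: "k \<in> {..<r}"
        show "D i k * (sgnB B * rho k B * lp C n x k) = K * (D i k * lp C n x k)"
        proof (cases "D i k = 0")
          case False
          then have "par k = (\<not> par i)" using odd_DD[OF ir] k by auto
          then have "rho k B = (-1) ^ m * rho i B"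
            by (auto simp: rho_def m_def simp flip: power_add mult_2)
          then show ?thesis unfolding K_def by (simp add: algebra_simps)
        qed simp
      qed
      also have "\<dots> = K * mv r D (lp C n x) i" using ir by (simp add: mv_def sum_distrib_left)
      finally show ?thesis .
    qed
    have C: "C \<subseteq> {..<n}" unfolding C_def by auto
    have L: "mv r D (lp C n x) i = (\<Sum>j\<in>C. (-1) ^ card {c\<in>C. c < j} * t j * lp (C - {j}) n x i)
          + (-1) ^ (n - m) * lp C n (mv r D x) i"
      using fun_cong[OF lp_d[OF C x, of n], of i] CC cC by simp
    have pw: "(-1::'r) ^ m * (-1) ^ (n - m) = (-1) ^ n" using mn by (simp flip: power_add)
    have "(eO (Phi x) + dO (Phi x)) i B = K * ((-1) ^ (n - m) * lp C n (mv r D x) i)"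
      unfolding plus_fun_apply E Dp L
      by (simp add: algebra_simps sum_distrib_left sum_negf)
    also have "\<dots> = Phi (\<lambda>i. (-1) ^ n * mv r D x i) i B"
    proof -
      have "lp C n (\<lambda>i. (-1) ^ n * mv r D x i) i = (-1) ^ n * lp C n (mv r D x) i"
        by (simp only: lp_scal)
      then show ?thesis using ir B unfolding K_def Phi_def C_def[symmetric]
        by (simp add: mult_ac flip: pw)
    qed
    finally show ?thesis .
  qed
qed

lemma sum_fun_app: "(sum f F) x = (\<Sum>a\<in>F. f a x)" for f :: "'a \<Rightarrow> 'b \<Rightarrow> 'c::comm_monoid_add"
  by (induction F rule: infinite_finite_induct) auto

lemma sig0: "sigma 0 = (\<lambda>_. 0)"
proof -
  have "sigma 0 = (\<lambda>B. sigma 0 B + sigma 0 B)" using sig_add[rule_format, of 0 0] by simp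
  then show ?thesis by (simp add: fun_eq_iff)
qed

lemma sigT_TT: "sigT r sigma x \<in> TT"
  by (rule TTI; (rule kosI)?; simp add: sigT_def kosD[OF sig_kos'])

lemma h_sigT: "hO (sigT r sigma x) = 0"
  using h_sig by (simp add: hO_def sigT_def fun_eq_iff)
lemma e_sigT: "eO (sigT r sigma x) = 0"
  using sig_chain by (simp add: eO_def sigT_def fun_eq_iff)

lemma g_is: "P.g = hO \<circ> dO" by (simp add: P.g_def)

lemma gsig_homog: "supp {m} (((hO \<circ> dO) ^^ m) (sigT r sigma x) i)"
proof (induction m arbitrary: i)
  case 0
  have "homog 0 (sigma a)" for a using sig_kos by blast
  then show ?case by (auto simp: supp_def sigT_def homog_def)
next
  case (Suc m)
  have "supp {m} (dO (((hO \<circ> dO) ^^ m) (sigT r sigma x)) j)" for j by (rule dO_supp[OF Suc])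
  then have "supp (Suc ` {m}) (hO (dO (((hO \<circ> dO) ^^ m) (sigT r sigma x))) i)"
    by (rule hO_supp[OF dO_TT[OF gp_TT[OF sigT_TT]]])
  then have "supp {Suc m} (hO (dO (((hO \<circ> dO) ^^ m) (sigT r sigma x))) i)" by simp
  then show ?case by (metis comp_apply funpow.simps(2))
qed

lemma gsig_top: "m \<noteq> n \<Longrightarrow> ((hO \<circ> dO) ^^ m) (sigT r sigma x) i {..<n} = 0"
  using gsig_homog[of m x i] by (auto simp: supp_def)

lemma psi_eq: "psi r par n D h sigma x = epsT r par n (((hO \<circ> dO) ^^ n) (sigT r sigma x))"
proof (rule ext)
  fix i
  define f where "f m = ((hO \<circ> dO) ^^ m) (sigT r sigma x) i {..<n}" for m
  have "{m. f m \<noteq> 0} \<subseteq> {n}" using gsig_top unfolding f_def by blast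
  then have "(\<Sum>m\<in>{m. f m \<noteq> 0}. f m) = f n"
    by (cases "f n = 0") (auto simp: subset_singleton_iff)
  then show "psi r par n D h sigma x i = epsT r par n (((hO \<circ> dO) ^^ n) (sigT r sigma x)) i"
    by (simp add: psi_def epsT_def sig_inf_def f_def)
qed

lemma epsT_add: "epsT r par n (z1 + z2) = epsT r par n z1 + epsT r par n z2"
  by (simp add: epsT_def fun_eq_iff algebra_simps)
lemma epsT_diff: "epsT r par n (z1 - z2) = epsT r par n z1 - epsT r par n z2"
  by (simp add: epsT_def fun_eq_iff algebra_simps)
lemma epsT_vecs: "epsT r par n z \<in> vecs r" by (simp add: epsT_def vecs_def)
lemma epsT_sum: "finite F \<Longrightarrow> epsT r par n (\<Sum>m\<in>F. z m) = (\<Sum>m\<in>F. epsT r par n (z m))"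
  by (auto simp: epsT_def fun_eq_iff sum_distrib_left sum_fun_app)
lemma epsT_scal: "epsT r par n (\<lambda>i B. c * z i B) = (\<lambda>i. c * epsT r par n z i)"
  by (simp add: epsT_def fun_eq_iff algebra_simps)

lemma epsT_eO: "epsT r par n (eO z) = 0"
  by (simp add: epsT_def eO_def kdelta_def fun_eq_iff)

lemma epsT_dO:
  assumes z: "z \<in> TT"
  shows "epsT r par n (dO z) = (\<lambda>i. (-1) ^ n * mv r D (epsT r par n z) i)"
proof (rule ext)
  fix i show "epsT r par n (dO z) i = (-1) ^ n * mv r D (epsT r par n z) i"
  proof (cases "i < r")
    case True
    have "epsT r par n (dO z) i = (\<Sum>j<r. (if par i then (-1) ^ n else 1) * (D i j * z j {..<n}))"
      using True by (simp add: epsT_def dT_def sum_distrib_left)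
    also have "\<dots> = (\<Sum>j<r. (-1) ^ n * (D i j * ((if par j then (-1) ^ n else 1) * z j {..<n})))"
    proof (rule sum.cong[OF refl])
      fix j assume j: "j \<in> {..<r}"
      show "(if par i then (-1) ^ n else 1) * (D i j * z j {..<n}) =
          (-1) ^ n * (D i j * ((if par j then (-1) ^ n else 1) * z j {..<n}))"
      proof (cases "D i j = 0")
        case False
        then have "par j = (\<not> par i)" using odd_DD[OF True] j by auto
        then show ?thesis by (auto simp: algebra_simps simp flip: power_add mult_2)
      qed simp
    qed
    also have "\<dots> = (-1) ^ n * mv r D (epsT r par n z) i"
      using True by (simp add: mv_def epsT_def sum_distrib_left)
    finally show ?thesis .
  qed (simp add: epsT_def dT_def mv_def)
qed

lemma epsA: "epsT r par n (P.A (sigT r sigma x)) = psi r par n D h sigma x"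
proof -
  have "epsT r par n (P.A (sigT r sigma x)) = (\<Sum>m\<le>n. epsT r par n ((P.g ^^ m) (sigT r sigma x)))"
    unfolding P.A_def by (simp add: epsT_sum)
  also have "\<dots> = (\<Sum>m\<le>n. if m = n then epsT r par n ((P.g ^^ n) (sigT r sigma x)) else 0)"
  proof (rule sum.cong[OF refl])
    fix m assume "m \<in> {..n}"
    show "epsT r par n ((P.g ^^ m) (sigT r sigma x)) =
        (if m = n then epsT r par n ((P.g ^^ n) (sigT r sigma x)) else 0)"
      using gsig_top[of m x] by (auto simp: epsT_def g_is fun_eq_iff)
  qed
  also have "\<dots> = psi r par n D h sigma x" by (simp add: psi_eq g_is)
  finally show ?thesis .
qed

lemma ti0: "in_tideal t n 0" unfolding in_tideal_def by (rule exI[of _ "\<lambda>_. 0"]) simp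
lemma ti_add: "in_tideal t n a \<Longrightarrow> in_tideal t n b \<Longrightarrow> in_tideal t n (a + b)"
proof -
  assume "in_tideal t n a" "in_tideal t n b"
  then obtain c1 c2 where "a = (\<Sum>i<n. c1 i * t i)" "b = (\<Sum>i<n. c2 i * t i)"
    unfolding in_tideal_def by blast
  then show ?thesis unfolding in_tideal_def
    by (intro exI[of _ "\<lambda>i. c1 i + c2 i"]) (simp add: sum.distrib distrib_right)
qed
lemma ti_mult: "in_tideal t n a \<Longrightarrow> in_tideal t n (c * a)"
proof -
  assume "in_tideal t n a"
  then obtain c1 where "a = (\<Sum>i<n. c1 i * t i)" unfolding in_tideal_def by blast
  then show ?thesis unfolding in_tideal_def
    by (intro exI[of _ "\<lambda>i. c * c1 i"]) (simp add: sum_distrib_left mult.assoc)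
qed
lemma ti_neg: "in_tideal t n a \<Longrightarrow> in_tideal t n (- a)"
  using ti_mult[of a "-1"] by simp
lemma ti_diff: "in_tideal t n a \<Longrightarrow> in_tideal t n b \<Longrightarrow> in_tideal t n (a - b)"
  by (metis ti_add ti_neg diff_conv_add_uminus)
lemma ti_sum: "(\<And>j. j \<in> F \<Longrightarrow> in_tideal t n (f j)) \<Longrightarrow> in_tideal t n (\<Sum>j\<in>F. f j)"
  by (induction F rule: infinite_finite_induct) (auto simp: ti0 ti_add)
lemma ti_t: "j < n \<Longrightarrow> in_tideal t n (t j)"
proof -
  assume j: "j < n"
  have "(\<Sum>i<n. (if i = j then 1 else 0) * t i) = (\<Sum>i<n. if i = j then t i else 0)"
    by (rule sum.cong) auto
  then show ?thesis unfolding in_tideal_def using j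
    by (intro exI[of _ "\<lambda>i. if i = j then 1 else 0"]) simp
qed
lemma ti_mv: "(\<And>j. in_tideal t n (x j)) \<Longrightarrow> in_tideal t n (mv r M x i)"
  by (auto simp: mv_def ti0 intro!: ti_sum ti_mult)

lemma qeq_refl: "qeq t n x x" by (simp add: qeq_def ti0)

lemma hO_pi: "z \<in> TT \<Longrightarrow> in_tideal t n (hO z j {})"
  using pi_h TTD(1) by (auto simp: hO_def sg_def ti0 intro: ti_neg)

lemma Ah_pi: assumes y: "y \<in> TT" shows "in_tideal t n (P.A (hO y) j {})"
proof -
  have "P.A (hO y) = hO y + hO (dO (P.A (hO y)))"
    using P.Afix[OF hO_TT[OF y]] by (simp add: g_is)
  then have "P.A (hO y) j {} = hO y j {} + hO (dO (P.A (hO y))) j {}"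
    by (metis plus_fun_apply)
  then show ?thesis using hO_pi[OF y] hO_pi[OF dO_TT[OF P.AT[OF hO_TT[OF y]]]] by (simp add: ti_add)
qed

lemma sigT_wd: "(\<And>i. i < r \<Longrightarrow> in_tideal t n (x i - y i)) \<Longrightarrow> sigT r sigma x = sigT r sigma y"
  using sig_wd by (auto simp: sigT_def fun_eq_iff)

definition Hc :: "(nat \<Rightarrow> 'r) \<Rightarrow> nat \<Rightarrow> 'r" where
  "Hc x = epsT r par n (P.A (hO (Phi x)))"

lemma conj1:
  assumes x: "x \<in> vecs r"
  shows "(\<lambda>i. psi r par n D h sigma (theta r n L x) i - x i)
         = (\<lambda>i. (-1) ^ n * mv r D (Hc x) i + Hc (\<lambda>j. (-1) ^ n * mv r D x j) i)"
proof -
  define z where "z = Phi x"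
  define u where "u = P.A (hO z)"
  define b where "b = z + dO u"
  have zT: "z \<in> TT" by (simp add: z_def Phi_TT)
  have uT: "u \<in> TT" by (simp add: u_def P.AT hO_TT zT)
  have L1: "eO u + dO u + P.A (hO (eO z)) + P.A (hO (dO z)) = P.A (PO b) - z"
    unfolding u_def b_def by (rule P.L1[OF zT])
  have Pb: "PO b = sigT r sigma (theta r n L x)"
    unfolding PO_def
  proof (rule sigT_wd)
    fix i assume i: "i < r"
    have "b i {} = theta r n L x i + mv r D (\<lambda>j. u j {}) i"
      using i fun_cong[OF Phi_pi[OF x], of i] TTD(2)[OF uT]
      by (simp add: b_def z_def dT_def mv_def)
    moreover have "in_tideal t n (mv r D (\<lambda>j. u j {}) i)"
      by (rule ti_mv) (simp add: u_def Ah_pi zT)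
    ultimately show "in_tideal t n (b i {} - theta r n L x i)" by simp
  qed
  have sumE: "P.A (hO (eO z)) + P.A (hO (dO z)) = P.A (hO (Phi (\<lambda>i. (-1) ^ n * mv r D x i)))"
    using P.Aadd[OF hO_TT[OF eO_TT[OF zT]] hO_TT[OF dO_TT[OF zT]]]
      hO_add[OF eO_TT[OF zT] dO_TT[OF zT]] Phi_chain[OF x] by (simp add: z_def)
  have "epsT r par n (eO u + dO u + P.A (hO (eO z)) + P.A (hO (dO z)))
      = (\<lambda>i. (-1) ^ n * mv r D (Hc x) i) + Hc (\<lambda>j. (-1) ^ n * mv r D x j)"
    unfolding add.assoc[of "eO u + dO u"] sumE epsT_add epsT_eO epsT_dO[OF uT]
    by (simp add: Hc_def u_def z_def)
  moreover have "epsT r par n (P.A (PO b) - z) = psi r par n D h sigma (theta r n L x) - x"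
    unfolding epsT_diff Pb epsA z_def Phi_eps[OF x] ..
  ultimately show ?thesis using L1 by (simp add: fun_eq_iff)
qed

section \<open>parity\<close>

definition vpar :: "bool \<Rightarrow> (nat \<Rightarrow> 'r) \<Rightarrow> bool" where
  "vpar q x \<longleftrightarrow> (\<forall>i. x i \<noteq> 0 \<longrightarrow> par i = q)"
definition tpar :: "bool \<Rightarrow> (nat \<Rightarrow> nat set \<Rightarrow> 'r) \<Rightarrow> bool" where
  "tpar q z \<longleftrightarrow> (\<forall>i B. z i B \<noteq> 0 \<longrightarrow> (par i \<noteq> odd (card B)) = q)"

lemma tpar_hO:
  assumes z: "z \<in> TT" and q: "tpar q z" shows "tpar (\<not> q) (hO z)"
  unfolding tpar_def
proof (intro allI impI)
  fix i B assume nz: "hO z i B \<noteq> 0"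
  then have i: "i < r" and hz: "h (z i) B \<noteq> 0" by (auto simp: hO_def split: if_splits)
  have "supp {p. odd p = (par i \<noteq> q)} (z i)" using q by (auto simp: tpar_def supp_def)
  from h_supp[OF TTD(1)[OF z] this] hz have "card B \<in> Suc ` {p. odd p = (par i \<noteq> q)}"
    by (simp add: supp_def)
  then show "(par i \<noteq> odd (card B)) = (\<not> q)" by auto
qed

lemma tpar_dO:
  assumes q: "tpar q z" shows "tpar (\<not> q) (dO z)"
  unfolding tpar_def
proof (intro allI impI)
  fix i B assume nz: "dO z i B \<noteq> 0"
  then have i: "i < r" by (auto simp: dT_def split: if_splits)
  from nz i obtain j where j: "j < r" "D i j * z j B \<noteq> 0"
    by (auto simp: dT_def elim!: sum.not_neutral_contains_not_neutral)
  then have "D i j \<noteq> 0" "z j B \<noteq> 0" by auto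
  then have "par j = (\<not> par i)" "(par j \<noteq> odd (card B)) = q"
    using odd_DD[OF i j(1)] q by (auto simp: tpar_def)
  then show "(par i \<noteq> odd (card B)) = (\<not> q)" by auto
qed

lemma tpar_gp: "z \<in> TT \<Longrightarrow> tpar q z \<Longrightarrow> tpar q ((P.g ^^ m) z)"
proof (induction m)
  case (Suc m)
  have "tpar (\<not> \<not> q) (hO (dO ((P.g ^^ m) z)))"
    by (rule tpar_hO[OF dO_TT[OF P.gpT[OF Suc.prems(1)]] tpar_dO[OF Suc.IH[OF Suc.prems]]])
  then show ?case by (metis comp_apply funpow.simps(2) g_is)
qed simp

lemma tpar_sum: "(\<And>m. m \<in> F \<Longrightarrow> tpar q (z m)) \<Longrightarrow> tpar q (\<Sum>m\<in>F. z m)"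
  unfolding tpar_def
  by (auto simp: sum_fun_app elim!: sum.not_neutral_contains_not_neutral)

lemma tpar_A: "z \<in> TT \<Longrightarrow> tpar q z \<Longrightarrow> tpar q (P.A z)"
  unfolding P.A_def by (rule tpar_sum) (rule tpar_gp)

lemma eps_vpar: assumes q: "tpar q z" shows "vpar (q \<noteq> odd n) (epsT r par n z)"
  unfolding vpar_def
proof (intro allI impI)
  fix i assume "epsT r par n z i \<noteq> 0"
  then have "z i {..<n} \<noteq> 0" by (auto simp: epsT_def split: if_splits)
  then have "(par i \<noteq> odd (card {..<n})) = q" using q unfolding tpar_def by blast
  then show "par i = (q \<noteq> odd n)" by auto
qed

lemma mv_vpar: "odd_matrix r par M \<Longrightarrow> vpar q x \<Longrightarrow> vpar (\<not> q) (mv r M x)"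
  unfolding vpar_def
proof (intro allI impI)
  fix i assume M: "odd_matrix r par M" and x: "\<forall>i. x i \<noteq> 0 \<longrightarrow> par i = q" and nz: "mv r M x i \<noteq> 0"
  then have i: "i < r" by (auto simp: mv_def split: if_splits)
  from nz i obtain j where j: "j < r" "M i j * x j \<noteq> 0"
    by (auto simp: mv_def elim!: sum.not_neutral_contains_not_neutral)
  then have "M i j \<noteq> 0" "x j \<noteq> 0" by auto
  then show "par i = (\<not> q)" using M x i j(1) by (auto simp: odd_matrix_def)
qed

lemma lp_vpar: "C \<subseteq> {..<n} \<Longrightarrow> vpar q x \<Longrightarrow> vpar (q \<noteq> odd (card (C \<inter> {..<k}))) (lp C k x)"
proof (induction k arbitrary: q x)
  case 0 then show ?case by simp
next
  case (Suc k)
  show ?case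
  proof (cases "k \<in> C")
    case True
    have kn: "k < n" using True Suc.prems by auto
    have "vpar (\<not> q) (mv r (L k) x)" using mv_vpar lam_odd kn Suc.prems(2) by blast
    from Suc.IH[OF Suc.prems(1) this]
    have "vpar ((\<not> q) \<noteq> odd (card (C \<inter> {..<k}))) (lp C (Suc k) x)" using True by simp
    moreover have "card (C \<inter> {..<Suc k}) = Suc (card (C \<inter> {..<k}))"
    proof -
      have "C \<inter> {..<Suc k} = insert k (C \<inter> {..<k})" using True by auto
      then show ?thesis by simp
    qed
    ultimately show ?thesis by simp
  next
    case False
    have "C \<inter> {..<Suc k} = C \<inter> {..<k}" using False by (auto simp: less_Suc_eq)
    then show ?thesis using Suc False by simp
  qed
qed

lemma theta_vpar: "vpar q x \<Longrightarrow> vpar (q \<noteq> odd n) (theta r n L x)"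
  using lp_vpar[of "{..<n}" q x n] by (auto simp: theta_def lamprod_lp vpar_def)

lemma Phi_tpar: assumes x: "vpar q x" shows "tpar (q \<noteq> odd n) (Phi x)"
  unfolding tpar_def
proof (intro allI impI)
  fix i B assume nz: "Phi x i B \<noteq> 0"
  then have B: "B \<subseteq> {..<n}" and l: "lp ({..<n} - B) n x i \<noteq> 0"
    by (auto simp: Phi_def split: if_splits)
  have fB: "finite B" using B finite_subset by blast
  have m: "card B \<le> n" using card_mono[OF _ B] by simp
  have "vpar (q \<noteq> odd (card (({..<n} - B) \<inter> {..<n}))) (lp ({..<n} - B) n x)"
    by (rule lp_vpar[OF _ x]) auto
  moreover have "card (({..<n} - B) \<inter> {..<n}) = n - card B"
  proof -
    have "({..<n} - B) \<inter> {..<n} = {..<n} - B" by auto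
    then show ?thesis using B fB by (simp add: card_Diff_subset)
  qed
  ultimately have "par i = (q \<noteq> odd (n - card B))" using l by (simp add: vpar_def)
  moreover have "odd n = (odd (n - card B) \<noteq> odd (card B))"
    using m by (metis le_add_diff_inverse2 odd_add)
  ultimately show "(par i \<noteq> odd (card B)) = (q \<noteq> odd n)" by auto
qed

lemma sigT_tpar: "vpar q x \<Longrightarrow> tpar q (sigT r sigma x)"
proof -
  assume x: "vpar q x"
  have "homog 0 (sigma a)" for a using sig_kos by blast
  show ?thesis unfolding tpar_def
  proof (intro allI impI)
    fix i B assume nz: "sigT r sigma x i B \<noteq> 0"
    then have s: "sigma (x i) B \<noteq> 0" by (auto simp: sigT_def split: if_splits)
    then have "x i \<noteq> 0" using sig0 by auto
    then have "par i = q" using x by (simp add: vpar_def)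
    moreover have "card B = 0" using s \<open>\<And>a. homog 0 (sigma a)\<close> by (auto simp: homog_def)
    ultimately show "(par i \<noteq> odd (card B)) = q" by simp
  qed
qed

lemma psi_vpar: "vpar q x \<Longrightarrow> vpar (q \<noteq> odd n) (psi r par n D h sigma x)"
  unfolding epsA[symmetric] by (rule eps_vpar, rule tpar_A[OF sigT_TT], erule sigT_tpar)

lemma Hc_vpar: "vpar q x \<Longrightarrow> vpar (\<not> q) (Hc x)"
proof -
  assume x: "vpar q x"
  have "tpar (\<not> (q \<noteq> odd n)) (hO (Phi x))" by (rule tpar_hO[OF Phi_TT Phi_tpar[OF x]])
  then have "tpar (\<not> (q \<noteq> odd n)) (P.A (hO (Phi x)))" by (rule tpar_A[OF hO_TT[OF Phi_TT]])
  from eps_vpar[OF this] show ?thesis unfolding Hc_def by (cases q) auto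
qed

lemma vpar_even: "x \<in> vecs r \<Longrightarrow> even_vec r par x = vpar False x"
  by (auto simp: even_vec_def vpar_def vecs_def) (metis not_le)
lemma vpar_odd: "x \<in> vecs r \<Longrightarrow> odd_vec r par x = vpar True x"
  by (auto simp: odd_vec_def vpar_def vecs_def) (metis not_le)

definition smul :: "'r \<Rightarrow> (nat \<Rightarrow> nat set \<Rightarrow> 'r) \<Rightarrow> nat \<Rightarrow> nat set \<Rightarrow> 'r" where
  "smul c z = (\<lambda>i B. c * z i B)"

lemma smul_TT: "z \<in> TT \<Longrightarrow> smul c z \<in> TT"
  by (rule TTI; (rule kosI)?) (auto simp: smul_def TTD kosD)
lemma smul_add: "smul c (x + y) = smul c x + smul c y"
  by (simp add: smul_def fun_eq_iff algebra_simps)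
lemma hO_smul: assumes z: "z \<in> TT" shows "hO (smul (phi s) z) = smul (phi s) (hO z)"
proof -
  have "h (\<lambda>B. phi s * z i B) = (\<lambda>B. phi s * h (z i) B)" for i using h_S TTD(1)[OF z] by blast
  then show ?thesis by (simp add: smul_def hO_def fun_eq_iff)
qed
lemma dO_smul: "dO (smul c z) = smul c (dO z)"
  by (simp add: smul_def dT_def fun_eq_iff sum_distrib_left algebra_simps)
lemma A_smul: "y \<in> TT \<Longrightarrow> P.A (smul (phi s) y) = smul (phi s) (P.A y)"
  by (rule P.Acomm[symmetric]; (simp only: smul_add)?; auto simp: smul_TT hO_smul dO_smul)

lemma Hc_vecs: "Hc x \<in> vecs r" by (simp add: Hc_def epsT_vecs)
lemma psi_vecs: "psi r par n D h sigma x \<in> vecs r" by (simp add: psi_eq epsT_vecs)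
lemma theta_vecs: "x \<in> vecs r \<Longrightarrow> theta r n L x \<in> vecs r"
  using lp_vecs[of x "{..<n}" n] by (simp add: theta_def lamprod_lp vecs_def)

lemma Hc_add: "Hc (\<lambda>i. x i + y i) = (\<lambda>i. Hc x i + Hc y i)"
proof -
  have eq: "(\<lambda>i. x i + y i) = x + y" by (simp add: fun_eq_iff)
  show ?thesis
    unfolding Hc_def eq Phi_add hO_add[OF Phi_TT Phi_TT] P.Aadd[OF hO_TT[OF Phi_TT] hO_TT[OF Phi_TT]] epsT_add
    by (simp add: plus_fun_def)
qed

lemma Hc_scal: "Hc (\<lambda>i. phi s * x i) = (\<lambda>i. phi s * Hc x i)"
proof -
  have "Phi (\<lambda>i. phi s * x i) = smul (phi s) (Phi x)" by (simp add: Phi_scal smul_def)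
  then show ?thesis
    by (simp add: Hc_def hO_smul Phi_TT A_smul hO_TT) (simp add: smul_def epsT_scal)
qed

lemma sigT_add: "sigT r sigma (\<lambda>i. x i + y i) = sigT r sigma x + sigT r sigma y"
  using sig_add by (simp add: sigT_def fun_eq_iff)
lemma sigT_scal: "sigT r sigma (\<lambda>i. phi s * x i) = smul (phi s) (sigT r sigma x)"
  using sig_S by (simp add: sigT_def smul_def fun_eq_iff)

lemma psi_add: "psi r par n D h sigma (\<lambda>i. x i + y i)
    = (\<lambda>i. psi r par n D h sigma x i + psi r par n D h sigma y i)"
  unfolding epsA[symmetric] sigT_add P.Aadd[OF sigT_TT sigT_TT] epsT_add by (simp add: plus_fun_def)

lemma psi_scal: "psi r par n D h sigma (\<lambda>i. phi s * x i) = (\<lambda>i. phi s * psi r par n D h sigma x i)"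
  unfolding epsA[symmetric] sigT_scal A_smul[OF sigT_TT] by (simp add: smul_def epsT_scal)

lemma psi_wd: "qeq t n x y \<Longrightarrow> psi r par n D h sigma x = psi r par n D h sigma y"
  unfolding psi_eq by (metis sigT_wd qeq_def)

lemma theta_lp: "theta r n L x = (\<lambda>i. (-1) ^ n * lp {..<n} n x i)"
  by (simp add: theta_def lamprod_lp)

lemma theta_add: "theta r n L (\<lambda>i. x i + y i) = (\<lambda>i. theta r n L x i + theta r n L y i)"
proof -
  have "(\<lambda>i. x i + y i) = x + y" by (simp add: fun_eq_iff)
  then show ?thesis by (simp add: theta_lp lp_add algebra_simps)
qed
lemma theta_diff: "theta r n L (x - y) = theta r n L x - theta r n L y"
  by (simp add: theta_lp lp_diff algebra_simps fun_eq_iff)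
lemma theta_scal: "theta r n L (\<lambda>i. c * x i) = (\<lambda>i. c * theta r n L x i)"
  by (simp add: theta_lp lp_scal algebra_simps)
lemma theta_plus: "theta r n L (x + y) = theta r n L x + theta r n L y"
  by (simp add: theta_lp lp_add algebra_simps fun_eq_iff)

lemma theta_d:
  assumes z: "z \<in> vecs r"
  shows "qeq t n (theta r n L (\<lambda>i. (-1) ^ n * mv r D z i)) (mv r D (theta r n L z))"
  unfolding qeq_def
proof
  fix i
  have C: "({..<n}::nat set) \<subseteq> {..<n}" by simp
  have l: "mv r D (lp {..<n} n z) i = (\<Sum>j\<in>{..<n}. (-1) ^ card {c\<in>{..<n}. c < j} * t j * lp ({..<n} - {j}) n z i)
          + (-1) ^ n * lp {..<n} n (mv r D z) i"
    using fun_cong[OF lp_d[OF C z, of n], of i] by simp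
  have a: "theta r n L (\<lambda>i. (-1) ^ n * mv r D z i) i = lp {..<n} n (mv r D z) i"
    by (simp add: theta_lp lp_scal flip: power_add mult_2)
  have b: "mv r D (theta r n L z) i = (-1) ^ n * mv r D (lp {..<n} n z) i"
    by (simp add: theta_lp mv_scal)
  have "in_tideal t n ((\<Sum>j\<in>{..<n}. (-1) ^ card {c\<in>{..<n}. c < j} * t j * lp ({..<n} - {j}) n z i))"
  proof (rule ti_sum)
    fix j assume j: "j \<in> {..<n}"
    have "in_tideal t n (((-1) ^ card {c\<in>{..<n}. c < j} * lp ({..<n} - {j}) n z i) * t j)"
      using j by (intro ti_mult ti_t) simp
    then show "in_tideal t n ((-1) ^ card {c\<in>{..<n}. c < j} * t j * lp ({..<n} - {j}) n z i)"
      by (simp add: mult_ac)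
  qed
  then have "in_tideal t n (- ((-1) ^ n * (\<Sum>j\<in>{..<n}. (-1) ^ card {c\<in>{..<n}. c < j} * t j * lp ({..<n} - {j}) n z i)))"
    by (intro ti_neg ti_mult)
  then show "in_tideal t n (theta r n L (\<lambda>i. (-1) ^ n * mv r D z i) i - mv r D (theta r n L z) i)"
    unfolding a b l by (simp add: algebra_simps flip: power_add mult_2)
qed

lemma psi_chain:
  assumes x: "x \<in> vecs r"
  shows "psi r par n D h sigma (mv r D x) = (\<lambda>i. (-1) ^ n * mv r D (psi r par n D h sigma x) i)"
proof -
  define y where "y = sigT r sigma x"
  define v where "v = P.A y"
  have yT: "y \<in> TT" by (simp add: y_def sigT_TT)
  have vT: "v \<in> TT" by (simp add: v_def P.AT yT)
  have L2: "eO v + dO v = P.A (PO (dO v))"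
    unfolding v_def by (rule P.L2[OF yT]) (simp_all add: y_def h_sigT e_sigT)
  have vfix: "v = y + hO (dO v)" unfolding v_def using P.Afix[OF yT] by (simp add: g_is)
  have vj: "in_tideal t n (v j {} - x j)" for j
  proof (cases "j < r")
    case True
    have "v j {} - x j = (sigma (x j) {} - x j) + hO (dO v) j {}"
      using True by (subst vfix) (simp add: y_def sigT_def)
    then show ?thesis using ti_add[OF pi_sig[rule_format, of "x j"] hO_pi[OF dO_TT[OF vT], of j]]
      by (simp add: algebra_simps)
  next
    case False then show ?thesis using TTD(2)[OF vT] vecsD[OF x] by (simp add: ti0)
  qed
  have Pd: "PO (dO v) = sigT r sigma (mv r D x)"
    unfolding PO_def
  proof (rule sigT_wd)
    fix i assume i: "i < r"
    have "dO v i {} - mv r D x i = mv r D (\<lambda>j. v j {} - x j) i"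
      using i by (simp add: dT_def mv_def sum_subtractf algebra_simps)
    then show "in_tideal t n (dO v i {} - mv r D x i)" using ti_mv[OF vj] by simp
  qed
  have "epsT r par n (eO v + dO v) = (\<lambda>i. (-1) ^ n * mv r D (psi r par n D h sigma x) i)"
    unfolding epsT_add epsT_eO epsT_dO[OF vT] by (simp add: v_def y_def epsA)
  moreover have "epsT r par n (P.A (PO (dO v))) = psi r par n D h sigma (mv r D x)"
    unfolding Pd epsA ..
  ultimately show ?thesis using L2 by simp
qed

lemma part1: "\<exists>H. odd_Smap phi r par H \<and>
            (\<forall>x\<in>vecs r. (\<lambda>i. psi r par n D h sigma (theta r n L x) i - x i)
               = (\<lambda>i. (-1) ^ n * mv r D (H x) i + H (\<lambda>j. (-1) ^ n * mv r D x j) i))"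
proof (intro exI conjI)
  show "odd_Smap phi r par Hc"
    unfolding odd_Smap_def
  proof (intro conjI ballI allI impI)
    fix x :: "nat \<Rightarrow> 'r" assume x: "x \<in> vecs r"
    show "Hc x \<in> vecs r" by (rule Hc_vecs)
    {
      assume "even_vec r par x"
      then have "vpar False x" using vpar_even[OF x] by simp
      then have "vpar True (Hc x)" using Hc_vpar by fastforce
      then show "odd_vec r par (Hc x)" using vpar_odd[OF Hc_vecs] by simp
    }
    {
      assume "odd_vec r par x"
      then have "vpar True x" using vpar_odd[OF x] by simp
      then have "vpar False (Hc x)" using Hc_vpar by fastforce
      then show "even_vec r par (Hc x)" using vpar_even[OF Hc_vecs] by simp
    }
  qed (simp_all add: Hc_add Hc_scal)
  show "\<forall>x\<in>vecs r. (\<lambda>i. psi r par n D h sigma (theta r n L x) i - x i)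
               = (\<lambda>i. (-1) ^ n * mv r D (Hc x) i + Hc (\<lambda>j. (-1) ^ n * mv r D x j) i)"
    using conj1 by blast
qed

lemma part2: "\<exists>H. odd_Smap_quot phi t n r par H \<and>
            (\<forall>x\<in>vecs r. qeq t n
               (\<lambda>i. theta r n L (psi r par n D h sigma (theta r n L (psi r par n D h sigma x))) i
                    - theta r n L (psi r par n D h sigma x) i)
               (\<lambda>i. mv r D (H x) i + H (mv r D x) i))"
proof (intro exI conjI)
  define H where "H x = theta r n L (Hc (psi r par n D h sigma x))" for x
  show "odd_Smap_quot phi t n r par H"
    unfolding odd_Smap_quot_def
  proof (intro conjI ballI allI impI)
    fix x :: "nat \<Rightarrow> 'r" assume x: "x \<in> vecs r"
    show "H x \<in> vecs r" by (simp add: H_def theta_vecs Hc_vecs)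
    {
      fix y assume "qeq t n x y"
      then show "qeq t n (H x) (H y)" by (simp add: H_def psi_wd qeq_refl)
    }
    {
      fix y
      show "qeq t n (H (\<lambda>i. x i + y i)) (\<lambda>i. H x i + H y i)"
        by (simp add: H_def psi_add Hc_add theta_add qeq_refl)
    }
    {
      fix s
      show "qeq t n (H (\<lambda>i. phi s * x i)) (\<lambda>i. phi s * H x i)"
        by (simp add: H_def psi_scal Hc_scal theta_scal qeq_refl)
    }
    {
      assume "even_vec r par x"
      then have "vpar False x" using vpar_even[OF x] by simp
      then have "vpar True (H x)" unfolding H_def
        using theta_vpar Hc_vpar psi_vpar by fastforce
      then have "odd_vec r par (H x)" using vpar_odd[of "H x"] \<open>H x \<in> vecs r\<close> by simp
      then show "\<exists>y. qeq t n (H x) y \<and> odd_vec r par y" using qeq_refl by blast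
    }
    {
      assume "odd_vec r par x"
      then have "vpar True x" using vpar_odd[OF x] by simp
      then have "vpar False (H x)" unfolding H_def
        using theta_vpar Hc_vpar psi_vpar by fastforce
      then have "even_vec r par (H x)" using vpar_even[of "H x"] \<open>H x \<in> vecs r\<close> by simp
      then show "\<exists>y. qeq t n (H x) y \<and> even_vec r par y" using qeq_refl by blast
    }
  qed
  show "\<forall>x\<in>vecs r. qeq t n
               (\<lambda>i. theta r n L (psi r par n D h sigma (theta r n L (psi r par n D h sigma x))) i
                    - theta r n L (psi r par n D h sigma x) i)
               (\<lambda>i. mv r D (H x) i + H (mv r D x) i)"
  proof
    fix x :: "nat \<Rightarrow> 'r" assume x: "x \<in> vecs r"
    define y where "y = psi r par n D h sigma x"
    have yv: "y \<in> vecs r" by (simp add: y_def psi_vecs)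
    define a where "a = (\<lambda>i. (-1) ^ n * mv r D (Hc y) i)"
    have c1: "psi r par n D h sigma (theta r n L y) - y = a + Hc (psi r par n D h sigma (mv r D x))"
    proof -
      have pc: "(\<lambda>j. (-1) ^ n * mv r D y j) = psi r par n D h sigma (mv r D x)"
        using psi_chain[OF x] by (simp add: y_def)
      show ?thesis using conj1[OF yv] unfolding pc by (simp add: a_def fun_eq_iff)
    qed
    have eq0: "theta r n L (psi r par n D h sigma (theta r n L y)) - theta r n L y
        = theta r n L a + H (mv r D x)"
      unfolding theta_diff[symmetric] c1 theta_plus H_def ..
    have eq: "theta r n L (psi r par n D h sigma (theta r n L y)) i - theta r n L y i
        = theta r n L a i + H (mv r D x) i" for i using fun_cong[OF eq0, of i] by simp
    have td: "qeq t n (theta r n L a) (mv r D (theta r n L (Hc y)))"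
      unfolding a_def by (rule theta_d[OF Hc_vecs])
    show "qeq t n (\<lambda>i. theta r n L (psi r par n D h sigma (theta r n L (psi r par n D h sigma x))) i
                    - theta r n L (psi r par n D h sigma x) i)
               (\<lambda>i. mv r D (H x) i + H (mv r D x) i)"
      using td unfolding qeq_def eq[unfolded y_def] by (simp add: H_def y_def)
  qed
qed

lemma part3: "\<forall>x\<in>vecs r. qeq t n (theta r n L (psi r par n D h sigma x))
            (theta r n L (epsT r par n (((hT r par h \<circ> dT r D) ^^ n) (sigT r sigma x))))"
  by (simp add: psi_eq qeq_refl)

end

theorem theorem7p4:
  fixes phi :: "'s::comm_ring_1 \<Rightarrow> 'r::comm_ring_1"
    and W :: 's
    and r :: nat and par :: "nat \<Rightarrow> bool" and D :: "nat \<Rightarrow> nat \<Rightarrow> 'r"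
    and n :: nat and t :: "nat \<Rightarrow> 'r" and L :: "nat \<Rightarrow> nat \<Rightarrow> nat \<Rightarrow> 'r"
    and sigma :: "'r \<Rightarrow> nat set \<Rightarrow> 'r"
    and h :: "(nat set \<Rightarrow> 'r) \<Rightarrow> (nat set \<Rightarrow> 'r)"
  assumes hom: "is_ring_hom phi"
    and mf: "is_mf r par (phi W) D"
    and qreg: "quasi_regular t n"
    and lam_odd: "\<forall>j<n. odd_matrix r par (L j)"
    and lam_htpy: "\<forall>j<n. \<forall>a<r. \<forall>b<r.
          (\<Sum>k<r. L j a k * D k b) + (\<Sum>k<r. D a k * L j k b) = (if a = b then t j else 0)"
    and sig_kos: "\<forall>a. sigma a \<in> kos n \<and> homog 0 (sigma a)"
    and sig_wd: "\<forall>a b. in_tideal t n (a - b) \<longrightarrow> sigma a = sigma b"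
    and sig_add: "\<forall>a b. sigma (a + b) = (\<lambda>B. sigma a B + sigma b B)"
    and sig_S: "\<forall>s a. sigma (phi s * a) = (\<lambda>B. phi s * sigma a B)"
    and sig_chain: "\<forall>a. kdelta t n (sigma a) = (\<lambda>_. 0)"
    and h_kos: "\<forall>k\<in>kos n. h k \<in> kos n"
    and h_deg: "\<forall>p. \<forall>k\<in>kos n. homog p k \<longrightarrow> homog (p + 1) (h k)"
    and h_add: "\<forall>k1\<in>kos n. \<forall>k2\<in>kos n. h (\<lambda>B. k1 B + k2 B) = (\<lambda>B. h k1 B + h k2 B)"
    and h_S: "\<forall>s. \<forall>k\<in>kos n. h (\<lambda>B. phi s * k B) = (\<lambda>B. phi s * h k B)"
    and pi_sig: "\<forall>a. in_tideal t n (sigma a {} - a)"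
    and sig_pi: "\<forall>k\<in>kos n. sigma (k {}) = (\<lambda>B. k B + kdelta t n (h k) B + h (kdelta t n k) B)"
    and hh: "\<forall>k\<in>kos n. h (h k) = (\<lambda>_. 0)"
    and h_sig: "\<forall>a. h (sigma a) = (\<lambda>_. 0)"
    and pi_h: "\<forall>k\<in>kos n. in_tideal t n (h k {})"
  shows "(\<exists>H. odd_Smap phi r par H \<and>
            (\<forall>x\<in>vecs r. (\<lambda>i. psi r par n D h sigma (theta r n L x) i - x i)
               = (\<lambda>i. (-1) ^ n * mv r D (H x) i + H (\<lambda>j. (-1) ^ n * mv r D x j) i)))
       \<and> (\<exists>H. odd_Smap_quot phi t n r par H \<and>
            (\<forall>x\<in>vecs r. qeq t n
               (\<lambda>i. theta r n L (psi r par n D h sigma (theta r n L (psi r par n D h sigma x))) i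
                    - theta r n L (psi r par n D h sigma x) i)
               (\<lambda>i. mv r D (H x) i + H (mv r D x) i)))
       \<and> (\<forall>x\<in>vecs r. qeq t n (theta r n L (psi r par n D h sigma x))
            (theta r n L (epsT r par n (((hT r par h \<circ> dT r D) ^^ n) (sigT r sigma x)))))"
proof -
  interpret C: conc phi W r par D n t L sigma h
    by unfold_locales (rule assms)+
  show ?thesis using C.part1 C.part2 C.part3 by blast
qed

end
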